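(* The linear map $\Phi:\mathit{NCK}\to\mathit{LR}$ defined on ordered forests by $\Phi(f)=M^*_{\varphi(f)}$ is an isomorphism of graded Hopf algebras.
   Context: Trees: $\mathcal{Y}_n$ = rooted planar binary trees with $n$ internal nodes, $\mathcal{Y}_0=\{|\}$; $s\vee t$ = root with left subtree $s$, right subtree $t$; $|\backslash t=t$, $s\backslash t=s_l\vee(s_r\backslash t)$. Tamari order: generated by replacing a subtree $(a\vee b)\vee c$ by the larger $a\vee(b\vee c)$. $\mathcal{Y}Sym$: graded connected Hopf algebra over $\mathbb{Q}$ with basis $F_t$; leaves of $t\in\mathcal{Y}_p$ numbered $0..p$; splitting at leaf $i$: $|\to(|,|)$, $t_l\vee t_r\to(a,b\vee t_r)$ if leaf $i$ in $t_l$ and $t_l\to(a,b)$, $\to(t_l\vee c,d)$ if in $t_r$ and $t_r\to(c,d)$; $\Delta(F_t)=\sum_iF_{t_0}\otimes F_{t_1}$; for $s\in\mathcal{Y}_q$, $F_t\cdot F_s=\sum F_{(t_0,..,t_q)/s}$ over multisets $i_1\le..\le i_q$ of leaves of $t$, the division splitting $t$ at $i_q$ into $(t',t_q)$ and dividing $t'$ at $i_1..i_{q-1}$, and $(t_0,..,t_q)/s$ grafting the root of $t_i$ on leaf $i$ of $s$. $M_t=\sum_{t\le s}\mu_{\mathcal{Y}_n}(t,s)F_s$. $\mathit{LR}$ is the graded dual Hopf algebra of $\mathcal{Y}Sym$, $\{M^*_t\}$ the basis dual to $\{M_t\}$. $\mathit{NCK}$ (non-commutative Connes–Kreimer Hopf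 algebra): the free associative algebra over $\mathbb{Q}$ on the set of finite rooted planar trees; its basis is ordered forests (finite sequences of rooted planar trees), the empty forest is the unit, product is concatenation, degree is the total number of nodes. A set $\mathsf{R}$ of nodes of a forest $f$ is admissible if every descendant of a node in $\mathsf{R}$ is in $\mathsf{R}$; $f'_{\mathsf{R}}$ is the ordered forest of subtrees formed by $\mathsf{R}$ (the subtrees rooted at nodes of $\mathsf{R}$ whose parent is not in $\mathsf{R}$), in left-to-right planar order, and $f''_{\mathsf{R}}$ is the ordered forest remaining after deleting $\mathsf{R}$. Coproduct: $\Delta(f)=\sum_{\mathsf{R}}f'_{\mathsf{R}}\otimes f''_{\mathsf{R}}$ over admissible $\mathsf{R}$. $\varphi$: from ordered forests to planar binary trees: $\varphi(\emptyset)=|$; for a rooted planar tree $T$ whose root has children subtrees forming the forest $f$ (in order), $\varphi(T)=\varphi(f)\vee|$; for $f=(T_1,\dots,T_k)$, $\varphi(f)=\varphi(T_1)\backslash\cdots\backslash\varphi(T_k)$. *)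

theory Defs
  imports Complex_Main
begin

text \<open>An element of a vector space with basis indexed by 'a is represented by its
coefficient function 'a => rat; elements of the (algebraic / graded) space are the
finitely supported ones. Tensor products of such spaces have basis indexed by pairs.\<close>

type_synonym 'a vec = "'a \<Rightarrow> rat"

definition fsupp :: "'a vec \<Rightarrow> bool" where
  "fsupp x \<longleftrightarrow> finite {a. x a \<noteq> 0}"

definition vbasis :: "'a \<Rightarrow> 'a vec" where
  "vbasis a = (\<lambda>b. if b = a then 1 else 0)"

definition lin :: "('a \<Rightarrow> 'b vec) \<Rightarrow> 'a vec \<Rightarrow> 'b vec" where
  "lin g x = (\<lambda>b. \<Sum>a\<in>{a. x a \<noteq> 0}. x a * g a b)"

definition lin2 :: "('a \<Rightarrow> 'b \<Rightarrow> 'c vec) \<Rightarrow> 'a vec \<Rightarrow> 'b vec \<Rightarrow> 'c vec" where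
  "lin2 g x y = (\<lambda>c. \<Sum>a\<in>{a. x a \<noteq> 0}. \<Sum>b\<in>{b. y b \<noteq> 0}. x a * y b * g a b c)"

definition tensor_map :: "('a \<Rightarrow> 'c vec) \<Rightarrow> ('b \<Rightarrow> 'd vec) \<Rightarrow> ('a \<times> 'b) vec \<Rightarrow> ('c \<times> 'd) vec" where
  "tensor_map g h = lin (\<lambda>(a, b). (\<lambda>(c, d). g a c * h b d))"

definition dpair :: "'a vec \<Rightarrow> 'a vec \<Rightarrow> rat" where
  "dpair \<xi> x = (\<Sum>a\<in>{a. x a \<noteq> 0}. \<xi> a * x a)"

definition tpair :: "'a vec \<Rightarrow> 'b vec \<Rightarrow> ('a \<times> 'b) vec \<Rightarrow> rat" where
  "tpair \<xi> \<eta> z = (\<Sum>p\<in>{p. z p \<noteq> 0}. \<xi> (fst p) * \<eta> (snd p) * z p)"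

datatype btree = Leaf | Br btree btree

fun bsize :: "btree \<Rightarrow> nat" where
  "bsize Leaf = 0"
| "bsize (Br l r) = bsize l + bsize r + 1"

fun under :: "btree \<Rightarrow> btree \<Rightarrow> btree" where
  "under Leaf t = t"
| "under (Br l r) t = Br l (under r t)"

text \<open>splitting at leaf i (leaves numbered 0..bsize t from left to right)\<close>
fun ysplit :: "btree \<Rightarrow> nat \<Rightarrow> btree \<times> btree" where
  "ysplit Leaf i = (Leaf, Leaf)"
| "ysplit (Br l r) i =
     (if i \<le> bsize l then (let (a, b) = ysplit l i in (a, Br b r))
      else (let (c, d) = ysplit r (i - bsize l - 1) in (Br l c, d)))"

text \<open>division at leaves given in decreasing order i_q, ..., i_1: split at i_q into
  (t', t_q) and divide t' at the remaining leaves\<close>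
fun ydivide_rev :: "btree \<Rightarrow> nat list \<Rightarrow> btree list" where
  "ydivide_rev t [] = [t]"
| "ydivide_rev t (i # js) = ydivide_rev (fst (ysplit t i)) js @ [snd (ysplit t i)]"

definition ydivide :: "btree \<Rightarrow> nat list \<Rightarrow> btree list" where
  "ydivide t is = ydivide_rev t (rev is)"

text \<open>grafting (t_0,...,t_q)/s : root of t_i grafted onto leaf i of s\<close>
fun graft :: "btree list \<Rightarrow> btree \<Rightarrow> btree" where
  "graft ts Leaf = hd ts"
| "graft ts (Br l r) = Br (graft (take (bsize l + 1) ts) l) (graft (drop (bsize l + 1) ts) r)"

definition multY_basis :: "btree \<Rightarrow> btree \<Rightarrow> btree vec" where
  "multY_basis t s = (\<lambda>u.
     \<Sum>is\<in>{is. length is = bsize s \<and> sorted is \<and> (\<forall>i\<in>set is. i \<le> bsize t)}.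
        vbasis (graft (ydivide t is) s) u)"

definition DeltaY_basis :: "btree \<Rightarrow> (btree \<times> btree) vec" where
  "DeltaY_basis t = (\<lambda>p. \<Sum>i\<in>{0..bsize t}. vbasis (ysplit t i) p)"

definition unitY :: "btree vec" where
  "unitY = vbasis Leaf"

inductive tamari_step :: "btree \<Rightarrow> btree \<Rightarrow> bool" where
  rot: "tamari_step (Br (Br a b) c) (Br a (Br b c))"
| left: "tamari_step l l' \<Longrightarrow> tamari_step (Br l r) (Br l' r)"
| right: "tamari_step r r' \<Longrightarrow> tamari_step (Br l r) (Br l r')"

definition tamari_le :: "btree \<Rightarrow> btree \<Rightarrow> bool" where
  "tamari_le = tamari_step\<^sup>*\<^sup>*"

definition mobius :: "('a \<Rightarrow> 'a \<Rightarrow> bool) \<Rightarrow> 'a \<Rightarrow> 'a \<Rightarrow> int" where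
  "mobius le = (THE m. \<forall>x y. m x y =
      (if x = y then 1
       else if le x y then - (\<Sum>z\<in>{z. le x z \<and> le z y \<and> z \<noteq> y}. m x z)
       else 0))"

text \<open>M_t = sum_{t <= s} mu(t,s) F_s  (Tamari order restricted to Y_n; it only
  relates trees of the same size)\<close>
definition Mbasis :: "btree \<Rightarrow> btree vec" where
  "Mbasis t = (\<lambda>s. if tamari_le t s then of_int (mobius tamari_le t s) else 0)"

text \<open>An element xi of LR is represented by its values xi(t) = <xi, F_t> (i.e. by its
  coefficients in the basis dual to {F_t}); elements of the graded dual are exactly the
  finitely supported such functions.\<close>

definition multLR :: "btree vec \<Rightarrow> btree vec \<Rightarrow> btree vec" where
  "multLR \<xi> \<eta> = (\<lambda>u. tpair \<xi> \<eta> (DeltaY_basis u))"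

definition unitLR :: "btree vec" where
  "unitLR = (\<lambda>u. if u = Leaf then 1 else 0)"

definition DeltaLR :: "btree vec \<Rightarrow> (btree \<times> btree) vec" where
  "DeltaLR \<xi> = (\<lambda>(s, t). dpair \<xi> (multY_basis s t))"

definition counitLR :: "btree vec \<Rightarrow> rat" where
  "counitLR \<xi> = dpair \<xi> unitY"

definition Mdual :: "btree \<Rightarrow> btree vec" where
  "Mdual t = (THE \<xi>. fsupp \<xi> \<and> (\<forall>s. dpair \<xi> (Mbasis s) = (if s = t then 1 else 0)))"

datatype ptree = Node "ptree list"

type_synonym forest = "ptree list"

text \<open>nodes as paths of child indices; fnodes k ts: nodes of the forest ts whose
  trees are numbered from k\<close>
fun tnodes :: "ptree \<Rightarrow> nat list set" and fnodes :: "nat \<Rightarrow> forest \<Rightarrow> nat list set" where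
  "tnodes (Node cs) = insert [] (fnodes 0 cs)"
| "fnodes k [] = {}"
| "fnodes k (t # ts) = Cons k ` tnodes t \<union> fnodes (Suc k) ts"

definition nodes :: "forest \<Rightarrow> nat list set" where
  "nodes f = fnodes 0 f"

definition fdeg :: "forest \<Rightarrow> nat" where
  "fdeg f = card (nodes f)"

definition admissible :: "forest \<Rightarrow> nat list set \<Rightarrow> bool" where
  "admissible f R \<longleftrightarrow> R \<subseteq> nodes f \<and> (\<forall>p\<in>R. \<forall>q. p @ q \<in> nodes f \<longrightarrow> p @ q \<in> R)"

text \<open>f'_R : subtrees rooted at nodes of R whose parent is not in R, left to right\<close>
fun tcutpart :: "nat list set \<Rightarrow> ptree \<Rightarrow> forest" and
    fcutpart :: "nat list set \<Rightarrow> nat \<Rightarrow> forest \<Rightarrow> forest" where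
  "tcutpart R (Node cs) = (if [] \<in> R then [Node cs] else fcutpart R 0 cs)"
| "fcutpart R k [] = []"
| "fcutpart R k (t # ts) = tcutpart {p. k # p \<in> R} t @ fcutpart R (Suc k) ts"

text \<open>f''_R : the forest remaining after deleting the nodes of R\<close>
fun tremain :: "nat list set \<Rightarrow> ptree \<Rightarrow> forest" and
    fremain :: "nat list set \<Rightarrow> nat \<Rightarrow> forest \<Rightarrow> forest" where
  "tremain R (Node cs) = (if [] \<in> R then [] else [Node (fremain R 0 cs)])"
| "fremain R k [] = []"
| "fremain R k (t # ts) = tremain {p. k # p \<in> R} t @ fremain R (Suc k) ts"

definition multN :: "forest vec \<Rightarrow> forest vec \<Rightarrow> forest vec" where
  "multN = lin2 (\<lambda>f g. vbasis (f @ g))"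

definition unitN :: "forest vec" where
  "unitN = vbasis []"

definition DeltaN_basis :: "forest \<Rightarrow> (forest \<times> forest) vec" where
  "DeltaN_basis f = (\<lambda>p. \<Sum>R\<in>{R. admissible f R}. vbasis (fcutpart R 0 f, fremain R 0 f) p)"

definition DeltaN :: "forest vec \<Rightarrow> (forest \<times> forest) vec" where
  "DeltaN = lin DeltaN_basis"

definition counitN :: "forest vec \<Rightarrow> rat" where
  "counitN x = x []"

fun phiT :: "ptree \<Rightarrow> btree" and phiF :: "forest \<Rightarrow> btree" where
  "phiT (Node cs) = Br (phiF cs) Leaf"
| "phiF [] = Leaf"
| "phiF (T # Ts) = under (phiT T) (phiF Ts)"

definition Phi_basis :: "forest \<Rightarrow> btree vec" where
  "Phi_basis f = Mdual (phiF f)"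

definition Phi :: "forest vec \<Rightarrow> btree vec" where
  "Phi = lin Phi_basis"

end

theory Submission
  imports Defs
begin


lemma under_Leaf_right[simp]: "under s Leaf = s"
  by (induction s) auto

lemma under_assoc: "under (under a b) c = under a (under b c)"
  by (induction a) auto

lemma bsize_under[simp]: "bsize (under a b) = bsize a + bsize b"
  by (induction a) auto

lemma ysplit_sizes:
  "i \<le> bsize u \<Longrightarrow> bsize (fst (ysplit u i)) = i \<and> bsize (snd (ysplit u i)) = bsize u - i"
proof (induction u arbitrary: i)
  case Leaf then show ?case by simp
next
  case (Br l r)
  show ?case
  proof (cases "i \<le> bsize l")
    case True
    then show ?thesis using Br.IH(1)[of i] by (auto split: prod.splits)
  next
    case False
    then show ?thesis using Br.IH(2)[of "i - bsize l - 1"] Br.prems by (auto split: prod.splits)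
  qed
qed

lemma ysplit_0: "ysplit t 0 = (Leaf, t)"
  by (induction t) (auto split: prod.splits)

lemma ysplit_under: "ysplit (under a b) (bsize a) = (a, b)"
  by (induction a) (auto simp: ysplit_0 split: prod.splits)

lemma ysplit_full: "ysplit s (bsize s) = (s, Leaf)"
  using ysplit_under[of s Leaf] by simp

fun pot :: "btree \<Rightarrow> nat" where
  "pot Leaf = 0"
| "pot (Br l r) = pot l + pot r + bsize r"

lemma step_size: "tamari_step a b \<Longrightarrow> bsize a = bsize b"
  by (induction rule: tamari_step.induct) auto

lemma step_pot: "tamari_step a b \<Longrightarrow> pot a < pot b"
  by (induction rule: tamari_step.induct) (auto dest: step_size)

lemma le_size: "tamari_le a b \<Longrightarrow> bsize a = bsize b"
  unfolding tamari_le_def by (induction rule: rtranclp_induct) (auto dest: step_size)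

lemma le_pot: "tamari_le a b \<Longrightarrow> pot a \<le> pot b"
  unfolding tamari_le_def by (induction rule: rtranclp_induct) (auto dest: step_pot)

lemma le_pot_strict: "tamari_le a b \<Longrightarrow> a \<noteq> b \<Longrightarrow> pot a < pot b"
  unfolding tamari_le_def
proof (induction rule: rtranclp_induct)
  case base then show ?case by simp
next
  case (step y z)
  then show ?case using le_pot[unfolded tamari_le_def, OF step(1)] step_pot[OF step(2)] by linarith
qed

lemma le_refl[simp]: "tamari_le a a" unfolding tamari_le_def by simp

lemma le_trans: "tamari_le a b \<Longrightarrow> tamari_le b c \<Longrightarrow> tamari_le a c"
  unfolding tamari_le_def by simp

lemma le_antisym: "tamari_le a b \<Longrightarrow> tamari_le b a \<Longrightarrow> a = b"
  using le_pot_strict le_pot by fastforce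

lemma step_le: "tamari_step a b \<Longrightarrow> tamari_le a b"
  unfolding tamari_le_def by simp

lemma le_Br_left: "tamari_le l l' \<Longrightarrow> tamari_le (Br l r) (Br l' r)"
  unfolding tamari_le_def
  by (induction rule: rtranclp_induct) (auto intro: rtranclp.rtrancl_into_rtrancl tamari_step.left)

lemma le_Br_right: "tamari_le r r' \<Longrightarrow> tamari_le (Br l r) (Br l r')"
  unfolding tamari_le_def
  by (induction rule: rtranclp_induct) (auto intro: rtranclp.rtrancl_into_rtrancl tamari_step.right)

lemma le_Br: "tamari_le l l' \<Longrightarrow> tamari_le r r' \<Longrightarrow> tamari_le (Br l r) (Br l' r')"
  using le_Br_left le_Br_right le_trans by blast

lemma le_Leaf_iff[simp]: "tamari_le t Leaf \<longleftrightarrow> t = Leaf"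
  using le_size[of t Leaf] by (cases t) auto

lemma under_mono_right: "tamari_le b b' \<Longrightarrow> tamari_le (under a b) (under a b')"
  by (induction a) (auto intro: le_Br_right)

lemma under_step_left: "tamari_step a a' \<Longrightarrow> tamari_step (under a b) (under a' b)"
  by (induction rule: tamari_step.induct) (auto intro: tamari_step.intros)

lemma under_mono_left: "tamari_le a a' \<Longrightarrow> tamari_le (under a b) (under a' b)"
  unfolding tamari_le_def
  by (induction rule: rtranclp_induct) (auto intro: rtranclp.rtrancl_into_rtrancl under_step_left)

lemma under_mono: "tamari_le a a' \<Longrightarrow> tamari_le b b' \<Longrightarrow> tamari_le (under a b) (under a' b')"
  using under_mono_left under_mono_right le_trans by blast

lemma Br_under_le: "tamari_le (Br (under a b) r) (under a (Br b r))"
proof (induction a)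
  case Leaf then show ?case by simp
next
  case (Br a1 a2)
  have "tamari_step (Br (Br a1 (under a2 b)) r) (Br a1 (Br (under a2 b) r))"
    by (rule tamari_step.rot)
  moreover have "tamari_le (Br a1 (Br (under a2 b) r)) (Br a1 (under a2 (Br b r)))"
    using Br.IH(2) by (rule le_Br_right)
  ultimately show ?case using step_le le_trans by fastforce
qed

lemma split_under_le: "tamari_le u (under (fst (ysplit u i)) (snd (ysplit u i)))"
proof (induction u arbitrary: i)
  case Leaf then show ?case by simp
next
  case (Br l r)
  show ?case
  proof (cases "i \<le> bsize l")
    case True
    obtain a b where ab: "ysplit l i = (a, b)" by fastforce
    have "tamari_le (Br l r) (Br (under a b) r)" using Br.IH(1)[of i] ab by (auto intro: le_Br_left)
    then show ?thesis using True ab Br_under_le le_trans by auto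
  next
    case False
    obtain c d where cd: "ysplit r (i - bsize l - 1) = (c, d)" by fastforce
    show ?thesis using Br.IH(2)[of "i - bsize l - 1"] False cd by (auto intro: le_Br_right)
  qed
qed

lemma split_step_mono:
  "tamari_step u v \<Longrightarrow> tamari_le (fst (ysplit u i)) (fst (ysplit v i)) \<and> tamari_le (snd (ysplit u i)) (snd (ysplit v i))"
proof (induction arbitrary: i rule: tamari_step.induct)
  case (rot a b c)
  show ?case
  proof (cases "i \<le> bsize a")
    case True
    obtain x y where xy: "ysplit a i = (x, y)" by fastforce
    show ?thesis using True xy by (auto intro!: step_le tamari_step.rot)
  next
    case F1: False
    show ?thesis
    proof (cases "i \<le> bsize a + bsize b + 1")
      case True
      obtain x y where xy: "ysplit b (i - bsize a - 1) = (x, y)" by fastforce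
      show ?thesis using True F1 xy by auto
    next
      case False
      obtain x y where xy: "ysplit c (i - (bsize a + bsize b + 1) - 1) = (x, y)" by fastforce
      have e: "i - bsize a - 1 - bsize b - 1 = i - (bsize a + bsize b + 1) - 1" by simp
      show ?thesis using False F1 xy e by (auto intro!: step_le tamari_step.rot)
    qed
  qed
next
  case (left l l' r)
  have sz: "bsize l = bsize l'" using left.hyps by (rule step_size)
  show ?case
  proof (cases "i \<le> bsize l")
    case True
    then show ?thesis using left.IH[of i] sz by (auto split: prod.splits intro: le_Br_left)
  next
    case False
    then show ?thesis using sz left.hyps by (auto split: prod.splits intro!: le_Br_left step_le tamari_step.left)
  qed
next
  case (right r r' l)
  show ?case
  proof (cases "i \<le> bsize l")
    case True
    then show ?thesis using right.hyps by (auto split: prod.splits intro!: le_Br_right step_le tamari_step.right)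
  next
    case False
    then show ?thesis using right.IH[of "i - bsize l - 1"] by (auto split: prod.splits intro: le_Br_right)
  qed
qed

lemma split_mono:
  "tamari_le u v \<Longrightarrow> tamari_le (fst (ysplit u i)) (fst (ysplit v i)) \<and> tamari_le (snd (ysplit u i)) (snd (ysplit v i))"
  unfolding tamari_le_def
proof (induction rule: rtranclp_induct)
  case base then show ?case by simp
next
  case (step y z)
  then show ?case using split_step_mono[OF step(2), of i] unfolding tamari_le_def by auto
qed

lemma le_under_iff:
  "tamari_le u (under a b) \<longleftrightarrow> bsize a \<le> bsize u \<and> tamari_le (fst (ysplit u (bsize a))) a
     \<and> tamari_le (snd (ysplit u (bsize a))) b"
proof
  assume h: "tamari_le u (under a b)"
  then have "bsize u = bsize a + bsize b" using le_size by fastforce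
  then show "bsize a \<le> bsize u \<and> tamari_le (fst (ysplit u (bsize a))) a
     \<and> tamari_le (snd (ysplit u (bsize a))) b"
    using split_mono[OF h, of "bsize a"] ysplit_under[of a b] by simp
next
  assume h: "bsize a \<le> bsize u \<and> tamari_le (fst (ysplit u (bsize a))) a
     \<and> tamari_le (snd (ysplit u (bsize a))) b"
  then show "tamari_le u (under a b)"
    using split_under_le[of u "bsize a"] under_mono le_trans by blast
qed

lemma le_under_sum:
  "(of_bool (tamari_le u (under a b)) :: 'a::comm_semiring_1) =
     (\<Sum>i\<in>{0..bsize u}. of_bool (tamari_le (fst (ysplit u i)) a) * of_bool (tamari_le (snd (ysplit u i)) b))"
proof -
  have z: "of_bool (tamari_le (fst (ysplit u i)) a) * of_bool (tamari_le (snd (ysplit u i)) b) = (0::'a)"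
    if "i \<in> {0..bsize u}" "i \<noteq> bsize a" for i
    using that ysplit_sizes[of i u] le_size[of "fst (ysplit u i)" a] by auto
  show ?thesis
  proof (cases "bsize a \<le> bsize u")
    case True
    then have "(\<Sum>i\<in>{0..bsize u}. of_bool (tamari_le (fst (ysplit u i)) a) * of_bool (tamari_le (snd (ysplit u i)) b))
       = (of_bool (tamari_le (fst (ysplit u (bsize a))) a) * of_bool (tamari_le (snd (ysplit u (bsize a))) b) :: 'a)"
      using z by (subst sum.remove[of _ "bsize a"]) (auto intro!: sum.neutral)
    then show ?thesis using True le_under_iff[of u a b] by simp
  next
    case False
    then show ?thesis using z le_under_iff[of u a b] by (auto intro!: sum.neutral[symmetric])
  qed
qed

lemma le_BrLeaf_iff: "tamari_le w (Br x Leaf) \<longleftrightarrow> (\<exists>w'. w = Br w' Leaf \<and> tamari_le w' x)"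
proof
  assume "tamari_le w (Br x Leaf)"
  then show "\<exists>w'. w = Br w' Leaf \<and> tamari_le w' x"
    unfolding tamari_le_def
  proof (induction rule: converse_rtranclp_induct)
    case base then show ?case by auto
  next
    case (step y z)
    then obtain z' where z: "z = Br z' Leaf" "tamari_step\<^sup>*\<^sup>* z' x" by auto
    from step(1) z show ?case
    proof (cases rule: tamari_step.cases)
      case (left l l' r)
      then show ?thesis using z by (auto intro: converse_rtranclp_into_rtranclp)
    next
      case (right r r' l)
      then show ?thesis using z by (auto elim: tamari_step.cases)
    qed auto
  qed
next
  assume "\<exists>w'. w = Br w' Leaf \<and> tamari_le w' x"
  then show "tamari_le w (Br x Leaf)" using le_Br_left by auto
qed


lemma finite_size: "finite {t. bsize t = n}"
proof (induction n rule: less_induct)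
  case (less n)
  show ?case
  proof (cases n)
    case 0
    then have "{t. bsize t = n} = {Leaf}" by (auto elim: bsize.elims)
    then show ?thesis by simp
  next
    case (Suc m)
    have "{t. bsize t = n} \<subseteq> (\<Union>k\<in>{0..m}. (\<lambda>(l, r). Br l r) ` ({l. bsize l = k} \<times> {r. bsize r = m - k}))"
    proof
      fix t assume "t \<in> {t. bsize t = n}"
      then show "t \<in> (\<Union>k\<in>{0..m}. (\<lambda>(l, r). Br l r) ` ({l. bsize l = k} \<times> {r. bsize r = m - k}))"
        using Suc by (cases t) force+
    qed
    moreover have "finite (\<Union>k\<in>{0..m}. (\<lambda>(l, r). Br l r) ` ({l. bsize l = k} \<times> {r. bsize r = m - k}))"
      using less Suc by auto
    ultimately show ?thesis by (rule finite_subset)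
  qed
qed

lemma finite_up: "finite {a. tamari_le s a}"
  by (rule finite_subset[OF _ finite_size[of "bsize s"]]) (auto dest: le_size)

lemma finite_down: "finite {a. tamari_le a s}"
  by (rule finite_subset[OF _ finite_size[of "bsize s"]]) (auto dest: le_size)

function mob :: "btree \<Rightarrow> btree \<Rightarrow> int" where
  "mob x y = (if x = y then 1 else if tamari_le x y then
      - (\<Sum>z\<in>{z. tamari_le x z \<and> tamari_le z y \<and> z \<noteq> y}. mob x z) else 0)"
  by auto
termination by (relation "measure (\<lambda>(x, y). pot y)") (auto simp: le_pot_strict)

declare mob.simps[simp del]

lemma mobius_eq: "mobius tamari_le = mob"
  unfolding mobius_def
proof (rule the_equality)
  show "\<forall>x y. mob x y = (if x = y then 1 else if tamari_le x y then
      - (\<Sum>z\<in>{z. tamari_le x z \<and> tamari_le z y \<and> z \<noteq> y}. mob x z) else 0)"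
    by (subst mob.simps) simp
next
  fix m :: "btree \<Rightarrow> btree \<Rightarrow> int"
  assume h: "\<forall>x y. m x y = (if x = y then 1 else if tamari_le x y then
      - (\<Sum>z\<in>{z. tamari_le x z \<and> tamari_le z y \<and> z \<noteq> y}. m x z) else 0)"
  have "m x y = mob x y" for x y
  proof (induction y rule: measure_induct_rule[of pot])
    case (less y)
    have "(\<Sum>z\<in>{z. tamari_le x z \<and> tamari_le z y \<and> z \<noteq> y}. m x z) =
          (\<Sum>z\<in>{z. tamari_le x z \<and> tamari_le z y \<and> z \<noteq> y}. mob x z)"
      using less by (intro sum.cong) (auto simp: le_pot_strict)
    then show ?case using h by (subst mob.simps) simp
  qed
  then show "m = mob" by (intro ext)
qed

lemma finite_interval: "finite {a. tamari_le s a \<and> tamari_le a t}"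
  by (rule finite_subset[OF _ finite_up[of s]]) auto

lemma mob_sum:
  "(\<Sum>a\<in>{a. tamari_le s a \<and> tamari_le a t}. mob s a) = (if s = t then 1 else 0)"
proof (cases "tamari_le s t")
  case False
  then have e: "{a. tamari_le s a \<and> tamari_le a t} = {}" using le_trans by blast
  have "s \<noteq> t" using False le_refl by metis
  then show ?thesis by (simp only: e) simp
next
  case True
  show ?thesis
  proof (cases "s = t")
    case True
    then have "{a. tamari_le s a \<and> tamari_le a t} = {s}" using le_antisym le_refl by blast
    then show ?thesis using True by (simp add: mob.simps)
  next
    case False
    have e: "{a. tamari_le s a \<and> tamari_le a t} = insert t {z. tamari_le s z \<and> tamari_le z t \<and> z \<noteq> t}"
      using True by auto
    have "mob s t = - (\<Sum>z\<in>{z. tamari_le s z \<and> tamari_le z t \<and> z \<noteq> t}. mob s z)"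
      using True False by (subst mob.simps) simp
    moreover have "finite {z. tamari_le s z \<and> tamari_le z t \<and> z \<noteq> t}"
      by (rule finite_subset[OF _ finite_interval[of s t]]) auto
    ultimately show ?thesis using False by (simp add: e)
  qed
qed

definition dind :: "btree \<Rightarrow> btree vec" where
  "dind t = (\<lambda>a. if tamari_le a t then 1 else 0)"

lemma fsupp_dind: "fsupp (dind t)"
  unfolding fsupp_def dind_def by (rule finite_subset[OF _ finite_down[of t]]) auto

lemma dpair_eq:
  assumes "finite S" "{a. x a \<noteq> 0} \<subseteq> S"
  shows "dpair \<xi> x = (\<Sum>a\<in>S. \<xi> a * x a)"
  unfolding dpair_def using assms by (intro sum.mono_neutral_left) auto

lemma Mbasis_supp: "{a. Mbasis s a \<noteq> 0} \<subseteq> {a. tamari_le s a}"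
  unfolding Mbasis_def by auto

lemma dpair_Mbasis:
  "dpair \<xi> (Mbasis s) = (\<Sum>a\<in>{a. tamari_le s a}. \<xi> a * of_int (mob s a))"
  by (subst dpair_eq[OF finite_up Mbasis_supp]) (auto simp: Mbasis_def mobius_eq intro!: sum.cong)

lemma dpair_dind_Mbasis: "dpair (dind t) (Mbasis s) = (if s = t then 1 else 0)"
proof -
  have "dpair (dind t) (Mbasis s) = (\<Sum>a\<in>{a. tamari_le s a}. (if tamari_le a t then of_int (mob s a) else 0))"
    unfolding dpair_Mbasis dind_def by (auto intro!: sum.cong)
  also have "\<dots> = (\<Sum>a\<in>{a. tamari_le s a \<and> tamari_le a t}. of_int (mob s a))"
    by (subst sum.inter_filter[symmetric]) (auto simp: finite_up intro!: sum.cong)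
  also have "\<dots> = of_int (\<Sum>a\<in>{a. tamari_le s a \<and> tamari_le a t}. mob s a)" by simp
  also have "\<dots> = (if s = t then 1 else 0)" by (simp add: mob_sum)
  finally show ?thesis .
qed

lemma dpair_diff:
  "dpair (\<lambda>a. \<xi> a - \<eta> a) x = dpair \<xi> x - dpair \<eta> x"
  unfolding dpair_def by (simp add: sum_subtractf left_diff_distrib)

lemma dual_zero:
  assumes "fsupp \<zeta>" "\<forall>s. dpair \<zeta> (Mbasis s) = 0"
  shows "\<zeta> = (\<lambda>a. 0)"
proof (rule ccontr)
  assume ne: "\<zeta> \<noteq> (\<lambda>a. 0)"
  let ?S = "{a. \<zeta> a \<noteq> 0}"
  have fin: "finite ?S" using assms(1) unfolding fsupp_def .
  have nem: "?S \<noteq> {}" using ne by auto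
  have "Max (pot ` ?S) \<in> pot ` ?S" using fin nem by (intro Max_in) auto
  then obtain a where a1: "a \<in> ?S" "pot a = Max (pot ` ?S)" by auto
  have a: "a \<in> ?S" "\<forall>b\<in>?S. pot b \<le> pot a"
    using a1 fin by auto
  have "dpair \<zeta> (Mbasis a) = (\<Sum>b\<in>{b. tamari_le a b}. \<zeta> b * of_int (mob a b))"
    by (rule dpair_Mbasis)
  also have "\<dots> = (\<Sum>b\<in>{a}. \<zeta> b * of_int (mob a b))"
  proof (rule sum.mono_neutral_right)
    show "finite {b. tamari_le a b}" by (rule finite_up)
    show "{a} \<subseteq> {b. tamari_le a b}" by simp
    show "\<forall>b\<in>{b. tamari_le a b} - {a}. \<zeta> b * of_int (mob a b) = 0"
    proof
      fix b assume "b \<in> {b. tamari_le a b} - {a}"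
      then have "pot a < pot b" using le_pot_strict by auto
      then have "\<zeta> b = 0" using a by force
      then show "\<zeta> b * of_int (mob a b) = 0" by simp
    qed
  qed
  also have "\<dots> = \<zeta> a" by (simp add: mob.simps)
  finally show False using assms(2) a by auto
qed

lemma Mdual_eq: "Mdual t = dind t"
  unfolding Mdual_def
proof (rule the_equality)
  show "fsupp (dind t) \<and> (\<forall>s. dpair (dind t) (Mbasis s) = (if s = t then 1 else 0))"
    using fsupp_dind dpair_dind_Mbasis by auto
next
  fix \<xi> assume h: "fsupp \<xi> \<and> (\<forall>s. dpair \<xi> (Mbasis s) = (if s = t then 1 else 0))"
  have "fsupp (\<lambda>a. \<xi> a - dind t a)"
    using h fsupp_dind[of t] unfolding fsupp_def
    by (rule_tac finite_subset[of _ "{a. \<xi> a \<noteq> 0} \<union> {a. dind t a \<noteq> 0}"]) auto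
  moreover have "\<forall>s. dpair (\<lambda>a. \<xi> a - dind t a) (Mbasis s) = 0"
    using h by (simp add: dpair_diff dpair_dind_Mbasis)
  ultimately have "(\<lambda>a. \<xi> a - dind t a) = (\<lambda>a. 0)" by (rule dual_zero)
  then show "\<xi> = dind t" by (intro ext) (metis eq_iff_diff_eq_0)
qed

lemma Phi_basis_eq: "Phi_basis f = dind (phiF f)"
  by (simp add: Phi_basis_def Mdual_eq)

lemma phiF_Cons[simp]: "phiF (Node cs # Ts) = Br (phiF cs) (phiF Ts)"
  by simp

lemma phiF_append: "phiF (f @ g) = under (phiF f) (phiF g)"
  by (induction f) (auto simp: under_assoc)

fun psiB :: "btree \<Rightarrow> forest" where
  "psiB Leaf = []"
| "psiB (Br l r) = Node (psiB l) # psiB r"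

lemma phiF_psiB: "phiF (psiB b) = b"
  by (induction b) auto

lemma psiB_phiF: "psiB (phiF f) = f"
proof (induction f rule: measure_induct_rule[of "size_list size"])
  case (less f)
  show ?case
  proof (cases f)
    case Nil then show ?thesis by simp
  next
    case (Cons T Ts)
    obtain cs where T: "T = Node cs" by (cases T)
    show ?thesis using less Cons T by simp
  qed
qed

lemma phiF_inj: "phiF f = phiF g \<Longrightarrow> f = g"
  by (metis psiB_phiF)

lemma nodes_props:
  shows "finite (tnodes T) \<and> card (tnodes T) = bsize (phiT T) \<and> [] \<in> tnodes T"
  and "finite (fnodes k f) \<and> card (fnodes k f) = bsize (phiF f) \<and> (\<forall>p\<in>fnodes k f. p \<noteq> [] \<and> hd p \<ge> k)"
proof (induction T and k f rule: tnodes_fnodes.induct)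
  case (1 cs)
  have "[] \<notin> fnodes 0 cs" using 1 by auto
  then show ?case using 1 by simp
next
  case (2 k) then show ?case by simp
next
  case (3 k t ts)
  have d: "Cons k ` tnodes t \<inter> fnodes (Suc k) ts = {}" using 3 by fastforce
  have "card (Cons k ` tnodes t \<union> fnodes (Suc k) ts) = card (tnodes t) + card (fnodes (Suc k) ts)"
    using 3 d by (simp add: card_Un_disjoint card_image)
  moreover obtain cs where "t = Node cs" by (cases t)
  ultimately show ?case using 3 by auto
qed

lemma fdeg_phi: "fdeg f = bsize (phiF f)"
  unfolding fdeg_def nodes_def using nodes_props(2) by blast


lemma CA:
  assumes "i \<le> j" "j \<le> bsize s"
  shows "fst (ysplit (fst (ysplit s j)) i) = fst (ysplit s i)
    \<and> snd (ysplit (fst (ysplit s j)) i) = fst (ysplit (snd (ysplit s i)) (j - i))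
    \<and> snd (ysplit (snd (ysplit s i)) (j - i)) = snd (ysplit s j)"
  using assms
proof (induction s arbitrary: i j)
  case Leaf then show ?case by simp
next
  case (Br l r)
  show ?case
  proof (cases "j \<le> bsize l")
    case True
    obtain a b where ab: "ysplit l j = (a, b)" by fastforce
    obtain a' b' where ab': "ysplit l i = (a', b')" by fastforce
    have sb': "bsize b' = bsize l - i" using ysplit_sizes[of i l] ab' True Br.prems by simp
    have IH: "fst (ysplit a i) = a' \<and> snd (ysplit a i) = fst (ysplit b' (j - i)) \<and> snd (ysplit b' (j - i)) = b"
      using Br.IH(1)[of i j] Br.prems True ab ab' by simp
    have "j - i \<le> bsize b'" using sb' True by simp
    then show ?thesis using True Br.prems ab ab' IH by (auto split: prod.splits)
  next
    case F: False
    show ?thesis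
    proof (cases "i \<le> bsize l")
      case True
      obtain c d where cd: "ysplit r (j - bsize l - 1) = (c, d)" by fastforce
      obtain a' b' where ab': "ysplit l i = (a', b')" by fastforce
      have sb': "bsize b' = bsize l - i" using ysplit_sizes[of i l] ab' True by simp
      have e: "j - i - bsize b' - 1 = j - bsize l - 1" using sb' True F by simp
      have "\<not> j - i \<le> bsize b'" using sb' True F by simp
      then show ?thesis using True F ab' cd e by (auto split: prod.splits)
    next
      case False
      obtain c d where cd: "ysplit r (j - bsize l - 1) = (c, d)" by fastforce
      note IH = Br.IH(2)[of "i - bsize l - 1" "j - bsize l - 1"]
      have e: "j - bsize l - 1 - (i - bsize l - 1) = j - i" using False F by simp
      show ?thesis using False F cd IH e Br.prems by (auto split: prod.splits)
    qed
  qed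
qed

lemma ydivide_snoc: "ydivide s (zs @ [y]) = ydivide (fst (ysplit s y)) zs @ [snd (ysplit s y)]"
  unfolding ydivide_def by simp

lemma ydivide_Nil[simp]: "ydivide s [] = [s]"
  unfolding ydivide_def by simp

lemma length_ydivide_rev: "length (ydivide_rev s js) = length js + 1"
  by (induction js arbitrary: s) auto

lemma length_ydivide[simp]: "length (ydivide s is) = length is + 1"
  unfolding ydivide_def by (simp add: length_ydivide_rev)

lemma D:
  assumes "sorted (xs @ i # ys)" "\<forall>x\<in>set (xs @ i # ys). x \<le> bsize s"
  shows "ydivide s (xs @ i # ys) = ydivide (fst (ysplit s i)) xs @ ydivide (snd (ysplit s i)) (map (\<lambda>j. j - i) ys)"
  using assms
proof (induction ys arbitrary: s rule: rev_induct)
  case Nil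
  then show ?case using ydivide_snoc[of s xs i] by simp
next
  case (snoc y ys)
  let ?s' = "fst (ysplit s y)"
  have yb: "y \<le> bsize s" using snoc.prems by simp
  have iy: "i \<le> y" using snoc.prems(1) by (simp add: sorted_append)
  have s': "bsize ?s' = y" using ysplit_sizes[OF yb] by simp
  have srt: "sorted (xs @ i # ys)" using snoc.prems(1) by (simp add: sorted_append)
  have bnd: "\<forall>x\<in>set (xs @ i # ys). x \<le> bsize ?s'" using snoc.prems(1) s' by (auto simp: sorted_append)
  have "ydivide s (xs @ i # ys @ [y]) = ydivide ?s' (xs @ i # ys) @ [snd (ysplit s y)]"
    using ydivide_snoc[of s "xs @ i # ys" y] by simp
  also have "\<dots> = ydivide (fst (ysplit ?s' i)) xs @ ydivide (snd (ysplit ?s' i)) (map (\<lambda>j. j - i) ys) @ [snd (ysplit s y)]"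
    using snoc.IH[OF srt bnd] by simp
  also have "\<dots> = ydivide (fst (ysplit s i)) xs @ ydivide (snd (ysplit s i)) (map (\<lambda>j. j - i) (ys @ [y]))"
    using CA[OF iy yb] ydivide_snoc[of "snd (ysplit s i)" "map (\<lambda>j. j - i) ys" "y - i"] by simp
  finally show ?case by simp
qed

lemma sum_ydivide:
  "sorted is \<Longrightarrow> \<forall>x\<in>set is. x \<le> bsize s \<Longrightarrow> sum_list (map bsize (ydivide s is)) = bsize s"
proof (induction "is" arbitrary: s rule: rev_induct)
  case Nil then show ?case by simp
next
  case (snoc y ys)
  have yb: "y \<le> bsize s" using snoc.prems by simp
  have s': "bsize (fst (ysplit s y)) = y" "bsize (snd (ysplit s y)) = bsize s - y" using ysplit_sizes[OF yb] by auto
  have "sum_list (map bsize (ydivide (fst (ysplit s y)) ys)) = y"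
    using snoc.IH[of "fst (ysplit s y)"] snoc.prems s' by (auto simp: sorted_append)
  then show ?case using ydivide_snoc[of s ys y] s' yb by simp
qed

lemma bsize_graft: "length ts = bsize t + 1 \<Longrightarrow> bsize (graft ts t) = bsize t + sum_list (map bsize ts)"
proof (induction t arbitrary: ts)
  case Leaf
  then obtain x where "ts = [x]" by (cases ts) auto
  then show ?case by simp
next
  case (Br l r)
  have "sum_list (map bsize (take (bsize l + 1) ts)) + sum_list (map bsize (drop (bsize l + 1) ts)) = sum_list (map bsize ts)"
    by (metis map_append sum_list_append append_take_drop_id)
  then show ?case using Br by simp
qed

definition Ms :: "nat \<Rightarrow> nat \<Rightarrow> nat list set" where
  "Ms p q = {is. length is = q \<and> sorted is \<and> (\<forall>i\<in>set is. i \<le> p)}"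

definition ww :: "btree \<Rightarrow> btree \<Rightarrow> nat list \<Rightarrow> btree" where
  "ww s t is = graft (ydivide s is) t"

lemma finite_Ms: "finite (Ms p q)"
  by (rule finite_subset[of _ "{xs. set xs \<subseteq> {0..p} \<and> length xs = q}"])
     (auto simp: Ms_def intro: finite_lists_length_eq)

lemma bsize_ww: "is \<in> Ms (bsize s) (bsize t) \<Longrightarrow> bsize (ww s t is) = bsize s + bsize t"
  unfolding ww_def Ms_def by (simp add: bsize_graft sum_ydivide)

lemma W_Br:
  assumes "is \<in> Ms (bsize s) (bsize ta + bsize tb + 1)"
  shows "ww s (Br ta tb) is = Br (ww (fst (ysplit s (is ! bsize ta))) ta (take (bsize ta) is))
     (ww (snd (ysplit s (is ! bsize ta))) tb (map (\<lambda>j. j - is ! bsize ta) (drop (bsize ta + 1) is)))"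
proof -
  let ?m = "bsize ta"
  have len: "length is = ?m + bsize tb + 1" using assms by (simp add: Ms_def)
  have dec: "is = take ?m is @ is ! ?m # drop (?m + 1) is"
    using id_take_nth_drop[of ?m "is"] len by simp
  have a1: "sorted is" "\<forall>x\<in>set is. x \<le> bsize s" using assms unfolding Ms_def by auto
  have a2: "sorted (take ?m is @ is ! ?m # drop (?m + 1) is)"
     "\<forall>x\<in>set (take ?m is @ is ! ?m # drop (?m + 1) is). x \<le> bsize s"
    using a1 dec by simp_all
  have "ydivide s is = ydivide (fst (ysplit s (is ! ?m))) (take ?m is) @
     ydivide (snd (ysplit s (is ! ?m))) (map (\<lambda>j. j - is ! ?m) (drop (?m + 1) is))"
    using D[OF a2] dec by simp
  moreover have "length (take ?m is) = ?m" using len by simp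
  ultimately show ?thesis unfolding ww_def by simp
qed


lemma sorted_map_minus: "sorted (xs :: nat list) \<Longrightarrow> sorted (map (\<lambda>j. j - c) xs)"
  unfolding sorted_map by (rule sorted_wrt_mono_rel[of xs "(\<le>)"]) (auto intro: diff_le_mono)

lemma sorted_map_plus: "sorted (xs :: nat list) \<Longrightarrow> sorted (map (\<lambda>j. j + c) xs)"
  unfolding sorted_map by (rule sorted_wrt_mono_rel[of xs "(\<le>)"]) auto

lemma Ms_nth: "is \<in> Ms p q \<Longrightarrow> n < q \<Longrightarrow> is ! n \<le> p"
  unfolding Ms_def by auto

lemma Ms_take: assumes "is \<in> Ms p q" "n < q" shows "take n is \<in> Ms (is ! n) n"
proof -
  have s: "sorted is" "length is = q" using assms unfolding Ms_def by auto
  have "x \<le> is ! n" if "x \<in> set (take n is)" for x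
  proof -
    from that obtain j where "j < length (take n is)" "x = take n is ! j" by (auto simp: in_set_conv_nth)
    then have "j < n" "x = is ! j" using s assms by auto
    then show ?thesis using s assms sorted_nth_mono[of "is" j n] by auto
  qed
  then show ?thesis using s assms unfolding Ms_def by (auto simp: sorted_wrt_take)
qed

lemma Ms_drop: assumes "is \<in> Ms p q" "n < q"
  shows "map (\<lambda>j. j - is ! n) (drop (n + 1) is) \<in> Ms (p - is ! n) (q - n - 1)"
proof -
  have s: "sorted is" "length is = q" "\<forall>i\<in>set is. i \<le> p" using assms unfolding Ms_def by auto
  have "\<forall>x\<in>set (drop (n + 1) is). x \<le> p" using s(3) by (meson in_set_dropD)
  then show ?thesis using s unfolding Ms_def by (auto intro!: sorted_map_minus sorted_wrt_drop diff_le_mono)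
qed

lemma Ms_append:
  assumes "is0 \<in> Ms k1 k2" "is1 \<in> Ms (p - k1) (q - k2)" "k1 \<le> p" "k2 \<le> q"
  shows "is0 @ map (\<lambda>i. i + k1) is1 \<in> Ms p q"
  using assms unfolding Ms_def
  by (auto simp: sorted_append intro!: sorted_map_plus)

lemma ww_Leaf[simp]: "ww s Leaf [] = s"
  by (simp add: ww_def)

lemma TI:
  assumes "k1 \<le> bsize s" "k2 \<le> bsize t" "is0 \<in> Ms k1 k2" "is1 \<in> Ms (bsize s - k1) (bsize t - k2)"
  shows "ysplit (ww s t (is0 @ map (\<lambda>i. i + k1) is1)) (k1 + k2) =
    (ww (fst (ysplit s k1)) (fst (ysplit t k2)) is0, ww (snd (ysplit s k1)) (snd (ysplit t k2)) is1)"
  using assms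
proof (induction t arbitrary: s k1 k2 is0 is1)
  case Leaf
  then have "k2 = 0" "is0 = []" "is1 = []" by (auto simp: Ms_def)
  then show ?case by simp
next
  case (Br ta tb)
  let ?m = "bsize ta"
  define "is" where "is = is0 @ map (\<lambda>i. i + k1) is1"
  have len0: "length is0 = k2" using Br.prems by (simp add: Ms_def)
  have len1: "length is1 = ?m + bsize tb + 1 - k2" using Br.prems by (simp add: Ms_def)
  have isM: "is \<in> Ms (bsize s) (?m + bsize tb + 1)"
    unfolding is_def using Ms_append[OF Br.prems(3,4) Br.prems(1,2)] by simp
  define istar where "istar = is ! ?m"
  define c where "c = fst (ysplit s istar)"
  define d where "d = snd (ysplit s istar)"
  have ist_le: "istar \<le> bsize s" unfolding istar_def using Ms_nth[OF isM] by simp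
  have sc: "bsize c = istar" "bsize d = bsize s - istar" unfolding c_def d_def using ysplit_sizes[OF ist_le] by auto
  have W: "ww s (Br ta tb) is = Br (ww c ta (take ?m is)) (ww d tb (map (\<lambda>j. j - istar) (drop (?m + 1) is)))"
    unfolding c_def d_def istar_def by (rule W_Br[OF isM])
  have tkM: "take ?m is \<in> Ms (bsize c) (bsize ta)" using Ms_take[OF isM, of ?m] sc istar_def by simp
  have wl: "bsize (ww c ta (take ?m is)) = istar + ?m" using bsize_ww[OF tkM] sc by simp
  show ?case
  proof (cases "k2 \<le> ?m")
    case True
    have mlt: "?m - k2 < length is1" using len1 True by simp
    have ist: "istar = is1 ! (?m - k2) + k1"
      unfolding istar_def is_def using True len0 mlt by (simp add: nth_append)
    have tk: "take ?m is = is0 @ map (\<lambda>i. i + k1) (take (?m - k2) is1)"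
      unfolding is_def using True len0 by (simp add: take_map)
    have dr: "drop (?m + 1) is = map (\<lambda>i. i + k1) (drop (?m - k2 + 1) is1)"
      unfolding is_def using True len0 by (simp add: drop_map Suc_diff_le)
    have k1i: "k1 \<le> istar" using ist by simp
    have is1'M: "take (?m - k2) is1 \<in> Ms (istar - k1) (?m - k2)"
      using Ms_take[OF Br.prems(4), of "?m - k2"] mlt len1 ist Br.prems(4) by (simp add: Ms_def)
    have IH: "ysplit (ww c ta (is0 @ map (\<lambda>i. i + k1) (take (?m - k2) is1))) (k1 + k2) =
       (ww (fst (ysplit c k1)) (fst (ysplit ta k2)) is0, ww (snd (ysplit c k1)) (snd (ysplit ta k2)) (take (?m - k2) is1))"
      using Br.IH(1)[of k1 c k2 is0 "take (?m - k2) is1"] k1i sc True Br.prems(3) is1'M by simp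
    have CA1: "fst (ysplit c k1) = fst (ysplit s k1)" "snd (ysplit c k1) = fst (ysplit (snd (ysplit s k1)) (istar - k1))"
      "snd (ysplit (snd (ysplit s k1)) (istar - k1)) = d"
      unfolding c_def d_def using CA[OF k1i ist_le] by auto
    obtain ta0 ta1 where tsp: "ysplit ta k2 = (ta0, ta1)" by fastforce
    have sta1: "bsize ta1 = ?m - k2" using ysplit_sizes[OF True] tsp by simp
    have ts: "ysplit (Br ta tb) k2 = (ta0, Br ta1 tb)" using True tsp by simp
    have s1: "bsize (snd (ysplit s k1)) = bsize s - k1" using ysplit_sizes[OF Br.prems(1)] by simp
    have is1M': "is1 \<in> Ms (bsize (snd (ysplit s k1))) (bsize ta1 + bsize tb + 1)"
      using Br.prems(4) s1 sta1 True by (simp add: Suc_diff_le)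
    have n1: "is1 ! bsize ta1 = istar - k1" using ist sta1 by simp
    have W2: "ww (snd (ysplit s k1)) (Br ta1 tb) is1 =
      Br (ww (fst (ysplit (snd (ysplit s k1)) (istar - k1))) ta1 (take (?m - k2) is1))
         (ww (snd (ysplit (snd (ysplit s k1)) (istar - k1))) tb (map (\<lambda>j. j - (istar - k1)) (drop (?m - k2 + 1) is1)))"
      using W_Br[OF is1M'] n1 sta1 by simp
    have dr2: "map (\<lambda>j. j - istar) (drop (?m + 1) is) = map (\<lambda>j. j - (istar - k1)) (drop (?m - k2 + 1) is1)"
      unfolding dr using k1i by simp
    have spl: "ysplit (Br (ww c ta (take ?m is)) R) (k1 + k2) =
       (fst (ysplit (ww c ta (take ?m is)) (k1 + k2)), Br (snd (ysplit (ww c ta (take ?m is)) (k1 + k2))) R)" for R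
      using wl k1i True by (simp split: prod.splits)
    show ?thesis
      unfolding is_def[symmetric] W spl
      using IH tk CA1 tsp ts W2 dr2 by simp
  next
    case False
    have mlt: "?m < k2" using False by simp
    have ist: "istar = is0 ! ?m"
      unfolding istar_def is_def using mlt len0 by (simp add: nth_append)
    have ik1: "istar \<le> k1" using Ms_nth[OF Br.prems(3) mlt] ist by simp
    have tk: "take ?m is = take ?m is0"
      unfolding is_def using mlt len0 by simp
    have dr: "map (\<lambda>j. j - istar) (drop (?m + 1) is) =
        map (\<lambda>j. j - istar) (drop (?m + 1) is0) @ map (\<lambda>i. i + (k1 - istar)) is1"
      unfolding is_def using mlt len0 ik1 by auto
    define k2' where "k2' = k2 - ?m - 1"
    have k2'le: "k2' \<le> bsize tb" using Br.prems(2) unfolding k2'_def by simp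
    have is0'M: "map (\<lambda>j. j - istar) (drop (?m + 1) is0) \<in> Ms (k1 - istar) k2'"
      using Ms_drop[OF Br.prems(3) mlt] ist unfolding k2'_def by simp
    have is1M: "is1 \<in> Ms (bsize d - (k1 - istar)) (bsize tb - k2')"
      using Br.prems(4) sc ik1 Br.prems(1,2) mlt unfolding k2'_def by (simp add: Ms_def)
    have IH: "ysplit (ww d tb (map (\<lambda>j. j - istar) (drop (?m + 1) is0) @ map (\<lambda>i. i + (k1 - istar)) is1)) ((k1 - istar) + k2') =
       (ww (fst (ysplit d (k1 - istar))) (fst (ysplit tb k2')) (map (\<lambda>j. j - istar) (drop (?m + 1) is0)),
        ww (snd (ysplit d (k1 - istar))) (snd (ysplit tb k2')) is1)"
      using Br.IH(2)[OF _ k2'le is0'M is1M] sc ik1 Br.prems(1) by simp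
    have CA1: "fst (ysplit (fst (ysplit s k1)) istar) = c"
      "snd (ysplit (fst (ysplit s k1)) istar) = fst (ysplit d (k1 - istar))"
      "snd (ysplit d (k1 - istar)) = snd (ysplit s k1)"
      unfolding c_def d_def using CA[OF ik1 Br.prems(1)] by auto
    obtain tb0 tb1 where tsp: "ysplit tb k2' = (tb0, tb1)" by fastforce
    have stb0: "bsize tb0 = k2'" using ysplit_sizes[OF k2'le] tsp by simp
    have ts: "ysplit (Br ta tb) k2 = (Br ta tb0, tb1)" using mlt tsp unfolding k2'_def by simp
    have s0: "bsize (fst (ysplit s k1)) = k1" using ysplit_sizes[OF Br.prems(1)] by simp
    have is0M': "is0 \<in> Ms (bsize (fst (ysplit s k1))) (bsize ta + bsize tb0 + 1)"
      using Br.prems(3) s0 stb0 mlt unfolding k2'_def by simp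
    have W2: "ww (fst (ysplit s k1)) (Br ta tb0) is0 =
       Br (ww (fst (ysplit (fst (ysplit s k1)) istar)) ta (take ?m is0))
          (ww (snd (ysplit (fst (ysplit s k1)) istar)) tb0 (map (\<lambda>j. j - istar) (drop (?m + 1) is0)))"
      using W_Br[OF is0M'] ist by simp
    have kk: "k1 + k2 - istar - ?m - 1 = (k1 - istar) + k2'" unfolding k2'_def using ik1 mlt by simp
    have spl: "ysplit (Br L (ww d tb (map (\<lambda>j. j - istar) (drop (?m + 1) is)))) (k1 + k2) =
       (Br L (fst (ysplit (ww d tb (map (\<lambda>j. j - istar) (drop (?m + 1) is))) ((k1 - istar) + k2'))),
        snd (ysplit (ww d tb (map (\<lambda>j. j - istar) (drop (?m + 1) is))) ((k1 - istar) + k2')))"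
      if "bsize L = istar + ?m" for L
      using that mlt ik1 kk by (simp split: prod.splits)
    show ?thesis
      unfolding is_def[symmetric] W spl[OF wl]
      using IH tk CA1 tsp ts W2 dr by simp
  qed
qed


definition Lc :: "btree \<Rightarrow> btree \<Rightarrow> btree \<Rightarrow> nat" where
  "Lc u s t = (\<Sum>is\<in>Ms (bsize s) (bsize t). of_bool (tamari_le (ww s t is) u))"

lemma Ms_0[simp]: "Ms p 0 = {[]}"
  unfolding Ms_def by auto

lemma Lc_Leaf: "Lc Leaf s t = of_bool (s = Leaf \<and> t = Leaf)"
proof (cases "s = Leaf \<and> t = Leaf")
  case True
  then show ?thesis unfolding Lc_def by simp
next
  case False
  have "of_bool (tamari_le (ww s t is) Leaf) = (0::nat)" if "is \<in> Ms (bsize s) (bsize t)" for "is"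
  proof -
    have "bsize (ww s t is) \<noteq> 0" using bsize_ww[OF that] False by (cases s; cases t) auto
    then show ?thesis by auto
  qed
  then show ?thesis unfolding Lc_def using False by simp
qed

lemma Lc_BrLeaf:
  "Lc (Br x Leaf) s t = (case t of Leaf \<Rightarrow> of_bool (tamari_le s (Br x Leaf))
     | Br ta tb \<Rightarrow> (if tb = Leaf then Lc x s ta else 0))"
proof (cases t)
  case Leaf
  then show ?thesis unfolding Lc_def by simp
next
  case (Br ta tb)
  let ?m = "bsize ta"
  let ?q = "?m + bsize tb + 1"
  have key: "tamari_le (ww s t is) (Br x Leaf) \<longleftrightarrow>
      tb = Leaf \<and> is ! ?m = bsize s \<and> tamari_le (ww s ta (take ?m is)) x"
    if isM: "is \<in> Ms (bsize s) ?q" for "is"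
  proof -
    have W: "ww s t is = Br (ww (fst (ysplit s (is ! ?m))) ta (take ?m is))
      (ww (snd (ysplit s (is ! ?m))) tb (map (\<lambda>j. j - is ! ?m) (drop (?m + 1) is)))"
      using W_Br[OF isM] Br by simp
    have le: "is ! ?m \<le> bsize s" using Ms_nth[OF isM] by simp
    have dM: "map (\<lambda>j. j - is ! ?m) (drop (?m + 1) is) \<in> Ms (bsize (snd (ysplit s (is ! ?m)))) (bsize tb)"
      using Ms_drop[OF isM, of ?m] ysplit_sizes[OF le] by simp
    have sz: "bsize (ww (snd (ysplit s (is ! ?m))) tb (map (\<lambda>j. j - is ! ?m) (drop (?m + 1) is)))
       = bsize s - is ! ?m + bsize tb"
      using bsize_ww[OF dM] ysplit_sizes[OF le] by simp
    have z: "w = Leaf \<longleftrightarrow> bsize w = 0" for w by (cases w) auto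
    have "tamari_le (ww s t is) (Br x Leaf) \<longleftrightarrow>
      bsize s - is ! ?m + bsize tb = 0 \<and> tamari_le (ww (fst (ysplit s (is ! ?m))) ta (take ?m is)) x"
      unfolding W le_BrLeaf_iff using sz z by auto
    also have "\<dots> \<longleftrightarrow> tb = Leaf \<and> is ! ?m = bsize s \<and> tamari_le (ww s ta (take ?m is)) x"
      using le z[of tb] ysplit_full[of s] by auto
    finally show ?thesis .
  qed
  show ?thesis
  proof (cases "tb = Leaf")
    case False
    have "Lc (Br x Leaf) s t = 0" unfolding Lc_def using key False Br by (auto intro!: sum.neutral)
    then show ?thesis using Br False by simp
  next
    case True
    let ?g = "\<lambda>is. of_bool (is ! ?m = bsize s \<and> tamari_le (ww s ta (take ?m is)) x) :: nat"
    have "Lc (Br x Leaf) s t = (\<Sum>is\<in>Ms (bsize s) (?m + 1). ?g is)"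
      unfolding Lc_def using key True Br by (auto intro!: sum.cong)
    also have "\<dots> = (\<Sum>is\<in>(\<lambda>xs. xs @ [bsize s]) ` Ms (bsize s) ?m. ?g is)"
    proof (rule sum.mono_neutral_right)
      show "finite (Ms (bsize s) (?m + 1))" by (rule finite_Ms)
      show "(\<lambda>xs. xs @ [bsize s]) ` Ms (bsize s) ?m \<subseteq> Ms (bsize s) (?m + 1)"
        by (auto simp: Ms_def sorted_append)
      show "\<forall>i\<in>Ms (bsize s) (?m + 1) - (\<lambda>xs. xs @ [bsize s]) ` Ms (bsize s) ?m. ?g i = 0"
      proof
        fix "is" assume a: "is \<in> Ms (bsize s) (?m + 1) - (\<lambda>xs. xs @ [bsize s]) ` Ms (bsize s) ?m"
        show "?g is = 0"
        proof (rule ccontr)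
          assume "?g is \<noteq> 0"
          then have e: "is ! ?m = bsize s" by (auto split: if_splits)
          have len: "length is = ?m + 1" using a by (simp add: Ms_def)
          have "is = take ?m is @ [is ! ?m]" using id_take_nth_drop[of ?m "is"] len by simp
          then have "is = take ?m is @ [bsize s]" using e by simp
          moreover have "take ?m is \<in> Ms (bsize s) ?m" using Ms_take[of "is" "bsize s" "?m + 1" ?m] a e by simp
          ultimately show False using a by blast
        qed
      qed
    qed
    also have "\<dots> = (\<Sum>xs\<in>Ms (bsize s) ?m. ?g (xs @ [bsize s]))"
      by (subst sum.reindex) (auto simp: inj_on_def)
    also have "\<dots> = Lc x s ta"
      unfolding Lc_def by (auto intro!: sum.cong simp: Ms_def nth_append)
    finally show ?thesis using Br True by simp
  qed
qed


lemma sum4: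
  assumes "finite I" "\<And>i. finite (J i)" "\<And>i j. finite (A i j)" "\<And>i j. finite (B i j)"
  shows "(\<Sum>i\<in>I. \<Sum>j\<in>J i. \<Sum>a\<in>A i j. \<Sum>b\<in>B i j. f i j a b) =
    (\<Sum>(i, j, a, b)\<in>(SIGMA i:I. SIGMA j:J i. A i j \<times> B i j). f i j a b)"
proof -
  have "(\<Sum>i\<in>I. \<Sum>j\<in>J i. \<Sum>a\<in>A i j. \<Sum>b\<in>B i j. f i j a b) =
        (\<Sum>i\<in>I. \<Sum>j\<in>J i. \<Sum>(a, b)\<in>A i j \<times> B i j. f i j a b)"
    by (simp add: sum.cartesian_product)
  also have "\<dots> = (\<Sum>i\<in>I. \<Sum>(j, p)\<in>(SIGMA j:J i. A i j \<times> B i j). (case p of (a, b) \<Rightarrow> f i j a b))"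
    using assms by (subst sum.Sigma) auto
  also have "\<dots> = (\<Sum>(i, q)\<in>(SIGMA i:I. SIGMA j:J i. A i j \<times> B i j).
       (case q of (j, p) \<Rightarrow> (case p of (a, b) \<Rightarrow> f i j a b)))"
    using assms by (subst sum.Sigma) (auto intro!: finite_SigmaI)
  finally show ?thesis by (simp add: case_prod_beta')
qed

lemma split_unique_aux:
  assumes "a \<in> Ms i j" "b \<in> Ms (P - i) (Q - j)" "a' \<in> Ms i' j'"
    "j' \<le> Q" "i + j = i' + j'" "a @ map (\<lambda>x. x + i) b = a' @ map (\<lambda>x. x + i') b'" "j < j'"
  shows False
proof -
  let ?L = "a @ map (\<lambda>x. x + i) b"
  have la: "length a = j" "length b = Q - j" "length a' = j'" using assms by (auto simp: Ms_def)
  have "0 < length b" using la assms by simp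
  then have "?L ! j = b ! 0 + i" using la by (simp add: nth_append)
  moreover have "?L ! j = a' ! j" using assms(6,7) la by (simp add: nth_append)
  moreover have "a' ! j \<le> i'" using Ms_nth[OF assms(3)] assms(7) by simp
  moreover have "i' < i" using assms(5,7) by simp
  ultimately show False by simp
qed

lemma split_unique:
  assumes "a \<in> Ms i j" "b \<in> Ms (P - i) (Q - j)" "a' \<in> Ms i' j'" "b' \<in> Ms (P - i') (Q - j')"
    "j \<le> Q" "j' \<le> Q" "i + j = i' + j'" "a @ map (\<lambda>x. x + i) b = a' @ map (\<lambda>x. x + i') b'"
  shows "i = i' \<and> j = j' \<and> a = a' \<and> b = b'"
proof -
  have jj: "j = j'"
  proof (rule ccontr)
    assume "j \<noteq> j'"
    then consider "j < j'" | "j' < j" by linarith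
    then show False
    proof cases
      case 1 then show False using split_unique_aux[OF assms(1,2,3,6,7,8)] by simp
    next
      case 2 then show False using split_unique_aux[OF assms(3,4,1,5) _ assms(8)[symmetric]] assms(7) by simp
    qed
  qed
  then have ii: "i = i'" using assms(7) by simp
  have la: "length a = j" "length a' = j'" using assms by (auto simp: Ms_def)
  have "a = a'" using assms(8) la jj by (metis append_eq_append_conv)
  moreover have "map (\<lambda>x. x + i) b = map (\<lambda>x. x + i) b'" using assms(8) la jj ii by (metis append_eq_append_conv)
  then have "b = b'" by (simp add: inj_map_eq_map inj_on_def)
  ultimately show ?thesis using ii jj by simp
qed

lemma split_exists:
  assumes isM: "is \<in> Ms P Q" and kle: "k \<le> P + Q"
  shows "\<exists>i j a b. i \<le> P \<and> j \<le> Q \<and> a \<in> Ms i j \<and> b \<in> Ms (P - i) (Q - j)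
     \<and> is = a @ map (\<lambda>x. x + i) b \<and> k = i + j"
proof -
  have len: "length is = Q" and srt: "sorted is" and bnd: "\<forall>x\<in>set is. x \<le> P"
    using isM by (auto simp: Ms_def)
  define Pj where "Pj = (\<lambda>j. min Q k \<le> j \<or> k - j \<le> is ! j)"
  define j where "j = (LEAST j. Pj j)"
  have Pmin: "Pj (min Q k)" by (simp add: Pj_def)
  have jle: "j \<le> min Q k" unfolding j_def using Least_le[of Pj, OF Pmin] .
  have Pjj: "Pj j" unfolding j_def using LeastI[of Pj, OF Pmin] .
  have below: "is ! j' < k - j'" if "j' < j" for j'
  proof -
    have "\<not> Pj j'" using not_less_Least[of j' Pj] that unfolding j_def by simp
    then show ?thesis unfolding Pj_def by simp
  qed
  define i where "i = k - j"
  have ij: "k = i + j" using jle unfolding i_def by simp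
  have nth_le: "is ! p \<le> is ! q" if "p \<le> q" "q < Q" for p q
    using sorted_nth_mono[OF srt that(1)] that len by simp
  have nthP: "is ! p \<le> P" if "p < Q" for p using bnd that len by auto
  have A: "\<forall>x\<in>set (take j is). x \<le> i"
  proof
    fix x assume "x \<in> set (take j is)"
    then obtain p where p: "p < j" "x = is ! p" using len jle by (auto simp: in_set_conv_nth)
    have "is ! (j - 1) < k - (j - 1)" using below[of "j - 1"] p by simp
    moreover have "is ! p \<le> is ! (j - 1)"
    proof (rule nth_le)
      show "p \<le> j - 1" using p by simp
      have "j \<le> Q" using jle by simp
      then show "j - 1 < Q" using p by linarith
    qed
    ultimately show "x \<le> i" using p unfolding i_def by simp
  qed
  have B: "\<forall>x\<in>set (drop j is). i \<le> x"
  proof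
    fix x assume "x \<in> set (drop j is)"
    then obtain p where p: "j \<le> p" "p < Q" "x = is ! p" using len by (auto simp: in_set_conv_nth) (metis add.commute le_add2 less_diff_conv)
    show "i \<le> x"
    proof (cases "j < min Q k")
      case True
      then have "k - j \<le> is ! j" using Pjj unfolding Pj_def by (auto simp: min_def split: if_splits)
      then show ?thesis using nth_le[of j p] p unfolding i_def by simp
    next
      case False
      then have "j = Q \<or> j = k" using jle by linarith
      then show ?thesis using p unfolding i_def by auto
    qed
  qed
  have iP: "i \<le> P"
  proof (cases "j < min Q k")
    case True
    then have "k - j \<le> is ! j" using Pjj unfolding Pj_def by (auto simp: min_def split: if_splits)
    then show ?thesis using nthP[of j] True unfolding i_def by simp
  next
    case False
    then have "j = Q \<or> j = k" using jle by linarith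
    then show ?thesis using kle unfolding i_def by auto
  qed
  have aM: "take j is \<in> Ms i j" using A len jle srt by (auto simp: Ms_def sorted_wrt_take)
  have bM: "map (\<lambda>x. x - i) (drop j is) \<in> Ms (P - i) (Q - j)"
    using len bnd srt by (auto simp: Ms_def intro!: sorted_map_minus sorted_wrt_drop diff_le_mono dest: in_set_dropD)
  have "map (\<lambda>x. x + i) (map (\<lambda>x. x - i) (drop j is)) = drop j is"
    using B by (induction "drop j is") (auto simp: map_idI)
  then have "is = take j is @ map (\<lambda>x. x + i) (map (\<lambda>x. x - i) (drop j is))" by simp
  moreover have "j \<le> Q" using jle by simp
  ultimately show ?thesis using iP aM bM ij by blast
qed


lemma Lc_under:
  "Lc (under a b) s t = (\<Sum>i\<in>{0..bsize s}. \<Sum>j\<in>{0..bsize t}.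
     Lc a (fst (ysplit s i)) (fst (ysplit t j)) * Lc b (snd (ysplit s i)) (snd (ysplit t j)))"
proof -
  define P where "P = bsize s"
  define Q where "Q = bsize t"
  define G where "G = (\<lambda>p. of_bool (tamari_le (fst p) a) * of_bool (tamari_le (snd p) b) :: nat)"
  define F where "F = (\<lambda>(is, k). G (ysplit (ww s t is) k))"
  define h where "h = (\<lambda>(i::nat, j::nat, is0::nat list, is1::nat list). (is0 @ map (\<lambda>x. x + i) is1, i + j))"
  define Dom where "Dom = (SIGMA i:{0..P}. SIGMA j:{0..Q}. Ms i j \<times> Ms (P - i) (Q - j))"
  have L: "Lc (under a b) s t = (\<Sum>y\<in>Ms P Q \<times> {0..P+Q}. F y)"
  proof -
    have "Lc (under a b) s t = (\<Sum>is\<in>Ms P Q. \<Sum>k\<in>{0..P+Q}. F (is, k))"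
      unfolding Lc_def P_def Q_def
    proof (rule sum.cong)
      fix "is" assume isM: "is \<in> Ms (bsize s) (bsize t)"
      show "of_bool (tamari_le (ww s t is) (under a b)) = (\<Sum>k\<in>{0..bsize s + bsize t}. F (is, k))"
        unfolding F_def G_def prod.case
        by (simp only: le_under_sum[of "ww s t is" a b] bsize_ww[OF isM])
    qed simp
    also have "\<dots> = (\<Sum>y\<in>Ms P Q \<times> {0..P+Q}. F y)"
      by (simp add: sum.cartesian_product)
    finally show ?thesis .
  qed
  have R: "(\<Sum>i\<in>{0..bsize s}. \<Sum>j\<in>{0..bsize t}.
     Lc a (fst (ysplit s i)) (fst (ysplit t j)) * Lc b (snd (ysplit s i)) (snd (ysplit t j)))
     = (\<Sum>x\<in>Dom. F (h x))"
  proof -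
    have "Lc a (fst (ysplit s i)) (fst (ysplit t j)) * Lc b (snd (ysplit s i)) (snd (ysplit t j))
       = (\<Sum>is0\<in>Ms i j. \<Sum>is1\<in>Ms (P - i) (Q - j). F (h (i, j, is0, is1)))"
      if ij: "i \<in> {0..P}" "j \<in> {0..Q}" for i j
    proof -
      have ip: "i \<le> bsize s" "j \<le> bsize t" using ij P_def Q_def by auto
      have sz: "bsize (fst (ysplit s i)) = i" "bsize (snd (ysplit s i)) = P - i"
        "bsize (fst (ysplit t j)) = j" "bsize (snd (ysplit t j)) = Q - j"
        using ysplit_sizes[OF ip(1)] ysplit_sizes[OF ip(2)] P_def Q_def by auto
      have "Lc a (fst (ysplit s i)) (fst (ysplit t j)) * Lc b (snd (ysplit s i)) (snd (ysplit t j))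
         = (\<Sum>is0\<in>Ms i j. \<Sum>is1\<in>Ms (P - i) (Q - j).
             of_bool (tamari_le (ww (fst (ysplit s i)) (fst (ysplit t j)) is0) a) *
             of_bool (tamari_le (ww (snd (ysplit s i)) (snd (ysplit t j)) is1) b))"
        unfolding Lc_def sz by (simp add: sum_product)
      also have "\<dots> = (\<Sum>is0\<in>Ms i j. \<Sum>is1\<in>Ms (P - i) (Q - j). F (h (i, j, is0, is1)))"
      proof (intro sum.cong refl)
        fix is0 is1 assume "is0 \<in> Ms i j" "is1 \<in> Ms (P - i) (Q - j)"
        then have "ysplit (ww s t (is0 @ map (\<lambda>x. x + i) is1)) (i + j) =
          (ww (fst (ysplit s i)) (fst (ysplit t j)) is0, ww (snd (ysplit s i)) (snd (ysplit t j)) is1)"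
          using TI[OF ip] P_def Q_def by simp
        then show "of_bool (tamari_le (ww (fst (ysplit s i)) (fst (ysplit t j)) is0) a) *
             of_bool (tamari_le (ww (snd (ysplit s i)) (snd (ysplit t j)) is1) b) = F (h (i, j, is0, is1))"
          unfolding F_def G_def h_def by simp
      qed
      finally show ?thesis .
    qed
    then have "(\<Sum>i\<in>{0..bsize s}. \<Sum>j\<in>{0..bsize t}.
     Lc a (fst (ysplit s i)) (fst (ysplit t j)) * Lc b (snd (ysplit s i)) (snd (ysplit t j)))
      = (\<Sum>i\<in>{0..P}. \<Sum>j\<in>{0..Q}. \<Sum>is0\<in>Ms i j. \<Sum>is1\<in>Ms (P - i) (Q - j). F (h (i, j, is0, is1)))"
      unfolding P_def Q_def by (intro sum.cong refl) auto
    also have "\<dots> = (\<Sum>(i, j, is0, is1)\<in>Dom. F (h (i, j, is0, is1)))"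
      unfolding Dom_def by (rule sum4) (auto simp: finite_Ms)
    also have "\<dots> = (\<Sum>x\<in>Dom. F (h x))"
      by (simp add: case_prod_beta')
    finally show ?thesis .
  qed
  have bij: "bij_betw h Dom (Ms P Q \<times> {0..P+Q})"
  proof (rule bij_betw_imageI)
    show "inj_on h Dom"
    proof (rule inj_onI)
      fix x y assume x: "x \<in> Dom" and y: "y \<in> Dom" and e: "h x = h y"
      obtain i j a1 b1 where xe: "x = (i, j, a1, b1)" by (cases x) auto
      obtain i' j' a' b' where ye: "y = (i', j', a', b')" by (cases y) auto
      show "x = y"
        using split_unique[of a1 i j b1 P Q a' i' j' b'] x y e xe ye unfolding Dom_def h_def by auto
    qed
    show "h ` Dom = Ms P Q \<times> {0..P+Q}"
    proof
      show "h ` Dom \<subseteq> Ms P Q \<times> {0..P+Q}"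
        unfolding Dom_def h_def by (auto intro!: Ms_append)
      show "Ms P Q \<times> {0..P+Q} \<subseteq> h ` Dom"
      proof
        fix y assume "y \<in> Ms P Q \<times> {0..P+Q}"
        then obtain "is" k where y: "y = (is, k)" "is \<in> Ms P Q" "k \<le> P + Q" by auto
        obtain i j a1 b1 where "i \<le> P \<and> j \<le> Q \<and> a1 \<in> Ms i j \<and> b1 \<in> Ms (P - i) (Q - j)
          \<and> is = a1 @ map (\<lambda>x. x + i) b1 \<and> k = i + j"
          using split_exists[OF y(2,3)] by blast
        then show "y \<in> h ` Dom" unfolding Dom_def h_def using y
          by (intro image_eqI[of _ _ "(i, j, a1, b1)"]) auto
      qed
    qed
  qed
  show ?thesis using L R sum.reindex_bij_betw[OF bij, of F] by simp
qed


definition tadm :: "ptree \<Rightarrow> nat list set \<Rightarrow> bool" where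
  "tadm T R \<longleftrightarrow> R \<subseteq> tnodes T \<and> (\<forall>p\<in>R. \<forall>q. p @ q \<in> tnodes T \<longrightarrow> p @ q \<in> R)"

definition fadm :: "nat \<Rightarrow> forest \<Rightarrow> nat list set \<Rightarrow> bool" where
  "fadm k f R \<longleftrightarrow> R \<subseteq> fnodes k f \<and> (\<forall>p\<in>R. \<forall>q. p @ q \<in> fnodes k f \<longrightarrow> p @ q \<in> R)"

lemma fnodes_hd: "p \<in> fnodes k f \<Longrightarrow> p \<noteq> [] \<and> k \<le> hd p"
  using nodes_props(2) by blast

lemma finite_fnodes: "finite (fnodes k f)"
  using nodes_props(2) by blast

lemma finite_tnodes: "finite (tnodes T)"
  using nodes_props(1) by blast

lemma finite_fadm: "finite {R. fadm k f R}"
  by (rule finite_subset[of _ "Pow (fnodes k f)"]) (auto simp: fadm_def finite_fnodes)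

lemma finite_tadm: "finite {R. tadm T R}"
  by (rule finite_subset[of _ "Pow (tnodes T)"]) (auto simp: tadm_def finite_tnodes)

lemma fcut_cong: "(\<forall>j\<ge>k. {p. j # p \<in> R} = {p. j # p \<in> R'}) \<Longrightarrow> fcutpart R k ts = fcutpart R' k ts"
  by (induction ts arbitrary: k) auto

lemma frem_cong: "(\<forall>j\<ge>k. {p. j # p \<in> R} = {p. j # p \<in> R'}) \<Longrightarrow> fremain R k ts = fremain R' k ts"
  by (induction ts arbitrary: k) auto

lemma fadm_Nil: "fadm k [] R \<longleftrightarrow> R = {}"
  by (auto simp: fadm_def)

lemma fadm_Cons_bij:
  "bij_betw (\<lambda>(R1, R2). Cons k ` R1 \<union> R2) ({R1. tadm T R1} \<times> {R2. fadm (Suc k) Ts R2}) {R. fadm k (T # Ts) R}"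
proof (rule bij_betw_imageI)
  show "inj_on (\<lambda>(R1, R2). Cons k ` R1 \<union> R2) ({R1. tadm T R1} \<times> {R2. fadm (Suc k) Ts R2})"
  proof (rule inj_onI, clarsimp)
    fix R1 R2 R1' R2'
    assume a: "fadm (Suc k) Ts R2" "fadm (Suc k) Ts R2'" "Cons k ` R1 \<union> R2 = Cons k ` R1' \<union> R2'"
    have h2: "p \<in> R2 \<Longrightarrow> p \<noteq> [] \<and> Suc k \<le> hd p" "p \<in> R2' \<Longrightarrow> p \<noteq> [] \<and> Suc k \<le> hd p" for p
      using a fnodes_hd unfolding fadm_def by blast+
    have "R1 = {p. k # p \<in> Cons k ` R1 \<union> R2}" using h2 by force
    moreover have "R1' = {p. k # p \<in> Cons k ` R1' \<union> R2'}" using h2 by force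
    ultimately have e1: "R1 = R1'" using a(3) by simp
    have "R2 = {p \<in> Cons k ` R1 \<union> R2. p \<noteq> [] \<and> hd p \<noteq> k}" using h2 by force
    moreover have "R2' = {p \<in> Cons k ` R1' \<union> R2'. p \<noteq> [] \<and> hd p \<noteq> k}" using h2 by force
    ultimately have "R2 = R2'" using a(3) by simp
    then show "R1 = R1' \<and> R2 = R2'" using e1 by simp
  qed
  show "(\<lambda>(R1, R2). Cons k ` R1 \<union> R2) ` ({R1. tadm T R1} \<times> {R2. fadm (Suc k) Ts R2}) = {R. fadm k (T # Ts) R}"
  proof
    show "(\<lambda>(R1, R2). Cons k ` R1 \<union> R2) ` ({R1. tadm T R1} \<times> {R2. fadm (Suc k) Ts R2}) \<subseteq> {R. fadm k (T # Ts) R}"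
    proof clarsimp
      fix R1 R2 assume t: "tadm T R1" and f: "fadm (Suc k) Ts R2"
      have h2: "p \<in> fnodes (Suc k) Ts \<Longrightarrow> p \<noteq> [] \<and> Suc k \<le> hd p" for p using fnodes_hd by blast
      show "fadm k (T # Ts) (Cons k ` R1 \<union> R2)"
        unfolding fadm_def
      proof (intro conjI ballI allI impI)
        show "Cons k ` R1 \<union> R2 \<subseteq> fnodes k (T # Ts)" using t f unfolding tadm_def fadm_def by auto
      next
        fix p q assume p: "p \<in> Cons k ` R1 \<union> R2" and pq: "p @ q \<in> fnodes k (T # Ts)"
        show "p @ q \<in> Cons k ` R1 \<union> R2"
        proof (cases "p \<in> R2")
          case True
          then have pp: "p \<noteq> [] \<and> Suc k \<le> hd p" using f h2 unfolding fadm_def by blast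
          then have "hd (p @ q) \<noteq> k" by simp
          then have "p @ q \<notin> Cons k ` tnodes T" by auto
          then have "p @ q \<in> fnodes (Suc k) Ts" using pq by auto
          then show ?thesis using True f unfolding fadm_def by blast
        next
          case False
          then obtain p1 where p1: "p = k # p1" "p1 \<in> R1" using p by auto
          have "p @ q \<notin> fnodes (Suc k) Ts" using p1 h2 by fastforce
          then have "p1 @ q \<in> tnodes T" using pq p1 by auto
          then show ?thesis using t p1 unfolding tadm_def by auto
        qed
      qed
    qed
    show "{R. fadm k (T # Ts) R} \<subseteq> (\<lambda>(R1, R2). Cons k ` R1 \<union> R2) ` ({R1. tadm T R1} \<times> {R2. fadm (Suc k) Ts R2})"
    proof
      fix R assume "R \<in> {R. fadm k (T # Ts) R}"
      then have R: "fadm k (T # Ts) R" by simp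
      have h2: "p \<in> fnodes (Suc k) Ts \<Longrightarrow> p \<noteq> [] \<and> Suc k \<le> hd p" for p using fnodes_hd by blast
      define R1 where "R1 = {p. k # p \<in> R}"
      define R2 where "R2 = R \<inter> fnodes (Suc k) Ts"
      have sub: "R \<subseteq> Cons k ` tnodes T \<union> fnodes (Suc k) Ts" using R unfolding fadm_def by simp
      have eq: "R = Cons k ` R1 \<union> R2" unfolding R1_def R2_def using sub by auto
      have t: "tadm T R1" unfolding tadm_def
      proof (intro conjI ballI allI impI)
        show "R1 \<subseteq> tnodes T"
        proof
          fix p assume "p \<in> R1"
          then have "k # p \<in> Cons k ` tnodes T \<union> fnodes (Suc k) Ts" using sub R1_def by auto
          moreover have "k # p \<notin> fnodes (Suc k) Ts" using h2 by fastforce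
          ultimately show "p \<in> tnodes T" by auto
        qed
      next
        fix p q assume "p \<in> R1" "p @ q \<in> tnodes T"
        then show "p @ q \<in> R1" using R unfolding R1_def fadm_def by (metis Cons_eq_appendI UnI1 fnodes.simps(2) imageI mem_Collect_eq)
      qed
      have f: "fadm (Suc k) Ts R2" unfolding fadm_def R2_def using R unfolding fadm_def by auto
      show "R \<in> (\<lambda>(R1, R2). Cons k ` R1 \<union> R2) ` ({R1. tadm T R1} \<times> {R2. fadm (Suc k) Ts R2})"
        using eq t f by (intro image_eqI[of _ _ "(R1, R2)"]) auto
    qed
  qed
qed

lemma fadm_Cons_parts:
  assumes "fadm (Suc k) Ts R2"
  shows "fcutpart (Cons k ` R1 \<union> R2) k (T # Ts) = tcutpart R1 T @ fcutpart R2 (Suc k) Ts"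
    "fremain (Cons k ` R1 \<union> R2) k (T # Ts) = tremain R1 T @ fremain R2 (Suc k) Ts"
proof -
  have h2: "p \<in> R2 \<Longrightarrow> p \<noteq> [] \<and> Suc k \<le> hd p" for p
    using assms fnodes_hd unfolding fadm_def by blast
  have e1: "{p. k # p \<in> Cons k ` R1 \<union> R2} = R1" using h2 by force
  have e2: "\<forall>j\<ge>Suc k. {p. j # p \<in> Cons k ` R1 \<union> R2} = {p. j # p \<in> R2}" by auto
  show "fcutpart (Cons k ` R1 \<union> R2) k (T # Ts) = tcutpart R1 T @ fcutpart R2 (Suc k) Ts"
    using e1 fcut_cong[OF e2] by simp
  show "fremain (Cons k ` R1 \<union> R2) k (T # Ts) = tremain R1 T @ fremain R2 (Suc k) Ts"
    using e1 frem_cong[OF e2] by simp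
qed

lemma tadm_Node: "{R. tadm (Node cs) R} = insert (tnodes (Node cs)) {R. fadm 0 cs R}"
proof (intro set_eqI iffI)
  fix R assume "R \<in> {R. tadm (Node cs) R}"
  then have R: "tadm (Node cs) R" by simp
  show "R \<in> insert (tnodes (Node cs)) {R. fadm 0 cs R}"
  proof (cases "[] \<in> R")
    case True
    then have "R = tnodes (Node cs)" using R unfolding tadm_def by (metis append_Nil subsetI subset_antisym)
    then show ?thesis by simp
  next
    case False
    then have "fadm 0 cs R" using R unfolding tadm_def fadm_def by auto
    then show ?thesis by simp
  qed
next
  fix R assume "R \<in> insert (tnodes (Node cs)) {R. fadm 0 cs R}"
  then consider "R = tnodes (Node cs)" | "fadm 0 cs R" by auto
  then show "R \<in> {R. tadm (Node cs) R}"
  proof cases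
    case 1 then show ?thesis by (simp add: tadm_def)
  next
    case 2
    have "[] \<notin> R" using 2 fnodes_hd unfolding fadm_def by blast
    then show ?thesis using 2 unfolding tadm_def fadm_def by auto
  qed
qed

lemma tnodes_not_fadm: "\<not> fadm 0 cs (tnodes (Node cs))"
  using fnodes_hd unfolding fadm_def by auto

definition RcF :: "nat \<Rightarrow> forest \<Rightarrow> btree \<Rightarrow> btree \<Rightarrow> nat" where
  "RcF k f s t = (\<Sum>R\<in>{R. fadm k f R}. of_bool (tamari_le s (phiF (fcutpart R k f))) * of_bool (tamari_le t (phiF (fremain R k f))))"

definition RcT :: "ptree \<Rightarrow> btree \<Rightarrow> btree \<Rightarrow> nat" where
  "RcT T s t = (\<Sum>R\<in>{R. tadm T R}. of_bool (tamari_le s (phiF (tcutpart R T))) * of_bool (tamari_le t (phiF (tremain R T))))"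

lemma RcF_Nil: "RcF k [] s t = of_bool (s = Leaf \<and> t = Leaf)"
  unfolding RcF_def fadm_Nil by simp

lemma RcT_Node: "RcT (Node cs) s t = of_bool (t = Leaf) * of_bool (tamari_le s (Br (phiF cs) Leaf))
   + (case t of Leaf \<Rightarrow> 0 | Br ta tb \<Rightarrow> if tb = Leaf then RcF 0 cs s ta else 0)"
proof -
  have "RcT (Node cs) s t = of_bool (tamari_le s (Br (phiF cs) Leaf)) * of_bool (t = Leaf) +
     (\<Sum>R\<in>{R. fadm 0 cs R}. of_bool (tamari_le s (phiF (fcutpart R 0 cs))) * of_bool (tamari_le t (Br (phiF (fremain R 0 cs)) Leaf)))"
  proof -
    have nz: "R \<in> {R. fadm 0 cs R} \<Longrightarrow> [] \<notin> R" for R using fnodes_hd unfolding fadm_def by blast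
    define g where "g = (\<lambda>R. of_bool (tamari_le s (phiF (tcutpart R (Node cs)))) * of_bool (tamari_le t (phiF (tremain R (Node cs)))) :: nat)"
    have "RcT (Node cs) s t = g (tnodes (Node cs)) + (\<Sum>R\<in>{R. fadm 0 cs R}. g R)"
      unfolding RcT_def tadm_Node g_def[symmetric]
      by (rule sum.insert[OF finite_fadm]) (use tnodes_not_fadm[of cs] in simp)
    moreover have "g (tnodes (Node cs)) = of_bool (tamari_le s (Br (phiF cs) Leaf)) * of_bool (t = Leaf)"
      unfolding g_def by simp
    moreover have "(\<Sum>R\<in>{R. fadm 0 cs R}. g R) = (\<Sum>R\<in>{R. fadm 0 cs R}. of_bool (tamari_le s (phiF (fcutpart R 0 cs))) * of_bool (tamari_le t (Br (phiF (fremain R 0 cs)) Leaf)))"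
      unfolding g_def using nz by (intro sum.cong refl) simp
    ultimately show ?thesis by simp
  qed
  also have "(\<Sum>R\<in>{R. fadm 0 cs R}. of_bool (tamari_le s (phiF (fcutpart R 0 cs))) * of_bool (tamari_le t (Br (phiF (fremain R 0 cs)) Leaf)))
     = (case t of Leaf \<Rightarrow> 0 | Br ta tb \<Rightarrow> if tb = Leaf then RcF 0 cs s ta else 0)"
  proof (cases t)
    case Leaf
    then show ?thesis by (simp add: le_BrLeaf_iff)
  next
    case (Br ta tb)
    then show ?thesis unfolding RcF_def by (auto simp: le_BrLeaf_iff intro!: sum.neutral)
  qed
  finally show ?thesis by (simp add: mult.commute)
qed


lemma RcF_Cons:
  "RcF k (T # Ts) s t = (\<Sum>i\<in>{0..bsize s}. \<Sum>j\<in>{0..bsize t}.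
     RcT T (fst (ysplit s i)) (fst (ysplit t j)) * RcF (Suc k) Ts (snd (ysplit s i)) (snd (ysplit t j)))"
proof -
  let ?A = "{R1. tadm T R1}"
  let ?B = "{R2. fadm (Suc k) Ts R2}"
  define X1 where "X1 = (\<lambda>R1. phiF (tcutpart R1 T))"
  define Y1 where "Y1 = (\<lambda>R1. phiF (tremain R1 T))"
  define X2 where "X2 = (\<lambda>R2. phiF (fcutpart R2 (Suc k) Ts))"
  define Y2 where "Y2 = (\<lambda>R2. phiF (fremain R2 (Suc k) Ts))"
  define a where "a = (\<lambda>R1 i j. of_bool (tamari_le (fst (ysplit s i)) (X1 R1)) * of_bool (tamari_le (fst (ysplit t j)) (Y1 R1)) :: nat)"
  define b where "b = (\<lambda>R2 i j. of_bool (tamari_le (snd (ysplit s i)) (X2 R2)) * of_bool (tamari_le (snd (ysplit t j)) (Y2 R2)) :: nat)"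
  define g where "g = (\<lambda>R. of_bool (tamari_le s (phiF (fcutpart R k (T # Ts)))) * of_bool (tamari_le t (phiF (fremain R k (T # Ts)))) :: nat)"
  have 1: "RcF k (T # Ts) s t = (\<Sum>x\<in>?A \<times> ?B. g ((\<lambda>(R1, R2). Cons k ` R1 \<union> R2) x))"
    unfolding RcF_def g_def[symmetric] by (rule sum.reindex_bij_betw[OF fadm_Cons_bij, symmetric])
  have 2: "g ((\<lambda>(R1, R2). Cons k ` R1 \<union> R2) x) = (\<Sum>i\<in>{0..bsize s}. \<Sum>j\<in>{0..bsize t}. a (fst x) i j * b (snd x) i j)"
    if "x \<in> ?A \<times> ?B" for x
  proof -
    obtain R1 R2 where x0: "x = (R1, R2)" by (cases x)
    then have x: "x = (R1, R2)" "R2 \<in> ?B" using that by auto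
    have "g ((\<lambda>(R1, R2). Cons k ` R1 \<union> R2) x) =
       of_bool (tamari_le s (under (X1 R1) (X2 R2))) * of_bool (tamari_le t (under (Y1 R1) (Y2 R2)))"
      unfolding g_def X1_def X2_def Y1_def Y2_def using fadm_Cons_parts[of k Ts R2 R1 T] x
      by (simp add: phiF_append)
    also have "\<dots> = (\<Sum>i\<in>{0..bsize s}. of_bool (tamari_le (fst (ysplit s i)) (X1 R1)) * of_bool (tamari_le (snd (ysplit s i)) (X2 R2))) *
        (\<Sum>j\<in>{0..bsize t}. of_bool (tamari_le (fst (ysplit t j)) (Y1 R1)) * of_bool (tamari_le (snd (ysplit t j)) (Y2 R2)))"
      by (simp only: le_under_sum)
    also have "\<dots> = (\<Sum>i\<in>{0..bsize s}. \<Sum>j\<in>{0..bsize t}. a R1 i j * b R2 i j)"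
      unfolding sum_product a_def b_def by (intro sum.cong refl) (simp add: ac_simps)
    finally show ?thesis using x by simp
  qed
  have "RcF k (T # Ts) s t = (\<Sum>x\<in>?A \<times> ?B. \<Sum>i\<in>{0..bsize s}. \<Sum>j\<in>{0..bsize t}. a (fst x) i j * b (snd x) i j)"
    using 1 2 by simp
  also have "\<dots> = (\<Sum>i\<in>{0..bsize s}. \<Sum>j\<in>{0..bsize t}. \<Sum>x\<in>?A \<times> ?B. a (fst x) i j * b (snd x) i j)"
    by (subst sum.swap) (subst sum.swap, rule refl)
  also have "\<dots> = (\<Sum>i\<in>{0..bsize s}. \<Sum>j\<in>{0..bsize t}. (\<Sum>R1\<in>?A. a R1 i j) * (\<Sum>R2\<in>?B. b R2 i j))"
    unfolding sum_product by (simp add: sum.cartesian_product case_prod_beta')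
  also have "\<dots> = (\<Sum>i\<in>{0..bsize s}. \<Sum>j\<in>{0..bsize t}.
     RcT T (fst (ysplit s i)) (fst (ysplit t j)) * RcF (Suc k) Ts (snd (ysplit s i)) (snd (ysplit t j)))"
    unfolding RcT_def RcF_def a_def b_def X1_def X2_def Y1_def Y2_def by simp
  finally show ?thesis .
qed

lemma under_BrLeaf: "under (Br a Leaf) b = Br a b" by simp

lemma main_count: "RcF k f s t = Lc (phiF f) s t"
proof (induction f arbitrary: k s t rule: measure_induct_rule[of "size_list size"])
  case (less f)
  show ?case
  proof (cases f)
    case Nil
    then show ?thesis by (simp add: RcF_Nil Lc_Leaf)
  next
    case (Cons T Ts)
    obtain cs where T: "T = Node cs" by (cases T)
    have IHcs: "RcF 0 cs x y = Lc (phiF cs) x y" for x y using less Cons T by simp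
    have IHTs: "RcF (Suc k) Ts x y = Lc (phiF Ts) x y" for x y using less Cons by simp
    have RT: "RcT (Node cs) x y = Lc (Br (phiF cs) Leaf) x y" for x y
      unfolding RcT_Node Lc_BrLeaf IHcs by (cases y) auto
    have "RcF k f s t = (\<Sum>i\<in>{0..bsize s}. \<Sum>j\<in>{0..bsize t}.
       RcT (Node cs) (fst (ysplit s i)) (fst (ysplit t j)) * RcF (Suc k) Ts (snd (ysplit s i)) (snd (ysplit t j)))"
      using RcF_Cons Cons T by simp
    also have "\<dots> = (\<Sum>i\<in>{0..bsize s}. \<Sum>j\<in>{0..bsize t}.
       Lc (Br (phiF cs) Leaf) (fst (ysplit s i)) (fst (ysplit t j)) * Lc (phiF Ts) (snd (ysplit s i)) (snd (ysplit t j)))"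
      using RT IHTs by simp
    also have "\<dots> = Lc (under (Br (phiF cs) Leaf) (phiF Ts)) s t" by (rule Lc_under[symmetric])
    also have "\<dots> = Lc (phiF f) s t" using Cons T by simp
    finally show ?thesis .
  qed
qed


declare sum_of_bool_eq[simp del] sum_mult_of_bool_eq[simp del] sum_of_bool_mult_eq[simp del]

abbreviation supp :: "'a vec \<Rightarrow> 'a set" where "supp x \<equiv> {a. x a \<noteq> 0}"

lemma sumvec:
  assumes "finite I"
  shows "(\<Sum>p\<in>{p. (\<Sum>i\<in>I. w i * vbasis (h i) p) \<noteq> 0}. F p * (\<Sum>i\<in>I. w i * vbasis (h i) p))
     = (\<Sum>i\<in>I. w i * F (h i))"
proof -
  define z where "z = (\<lambda>p. \<Sum>i\<in>I. w i * vbasis (h i) p)"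
  have sub: "supp z \<subseteq> h ` I"
  proof
    fix p assume "p \<in> supp z"
    then have "(\<Sum>i\<in>I. w i * vbasis (h i) p) \<noteq> 0" unfolding z_def by simp
    then obtain i where "i \<in> I" "w i * vbasis (h i) p \<noteq> 0" by (rule sum.not_neutral_contains_not_neutral)
    then show "p \<in> h ` I" by (auto simp: vbasis_def split: if_splits)
  qed
  have "(\<Sum>p\<in>supp z. F p * z p) = (\<Sum>p\<in>h ` I. F p * z p)"
    using sub assms by (intro sum.mono_neutral_left) auto
  also have "\<dots> = (\<Sum>p\<in>h ` I. \<Sum>i\<in>I. w i * (if h i = p then F p else 0))"
    unfolding z_def by (intro sum.cong refl) (auto simp: sum_distrib_left vbasis_def ac_simps intro!: sum.cong)
  also have "\<dots> = (\<Sum>i\<in>I. \<Sum>p\<in>h ` I. w i * (if h i = p then F p else 0))"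
    by (rule sum.swap)
  also have "\<dots> = (\<Sum>i\<in>I. w i * F (h i))"
  proof (intro sum.cong refl)
    fix i assume i: "i \<in> I"
    have "(\<Sum>p\<in>h ` I. w i * (if h i = p then F p else 0)) = (\<Sum>p\<in>h ` I. (if h i = p then w i * F p else 0))"
      by (intro sum.cong) auto
    also have "\<dots> = w i * F (h i)" using i assms by (simp add: sum.delta)
    finally show "(\<Sum>p\<in>h ` I. w i * (if h i = p then F p else 0)) = w i * F (h i)" .
  qed
  finally show ?thesis unfolding z_def .
qed

lemma sumvec1:
  assumes "finite I"
  shows "(\<Sum>p\<in>{p. (\<Sum>i\<in>I. vbasis (h i) p) \<noteq> 0}. F p * (\<Sum>i\<in>I. vbasis (h i) p))
     = (\<Sum>i\<in>I. F (h i))"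
  using sumvec[OF assms, where w="\<lambda>i. 1" and h=h and F=F] by simp

lemma lin_eq:
  assumes "finite S" "supp x \<subseteq> S"
  shows "lin g x b = (\<Sum>a\<in>S. x a * g a b)"
  unfolding lin_def using assms by (intro sum.mono_neutral_left) auto

lemma dind_of_bool: "dind t u = of_bool (tamari_le u t)"
  by (simp add: dind_def)

lemma Phi_eq:
  assumes "finite S" "supp x \<subseteq> S"
  shows "Phi x u = (\<Sum>f\<in>S. x f * of_bool (tamari_le u (phiF f)))"
  unfolding Phi_def lin_eq[OF assms] by (simp add: Phi_basis_eq dind_of_bool)

lemma Phi_unit: "Phi unitN = unitLR"
proof
  fix u
  have "Phi unitN u = (\<Sum>f\<in>{[]}. unitN f * of_bool (tamari_le u (phiF f)))"
    by (rule Phi_eq) (auto simp: unitN_def vbasis_def)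
  then show "Phi unitN u = unitLR u" by (simp add: unitN_def vbasis_def unitLR_def)
qed

lemma Phi_counit:
  assumes "fsupp x"
  shows "counitLR (Phi x) = counitN x"
proof -
  have fin: "finite (insert [] (supp x))" using assms unfolding fsupp_def by simp
  have "counitLR (Phi x) = Phi x Leaf"
    unfolding counitLR_def unitY_def
    by (subst dpair_eq[of "{Leaf}"]) (auto simp: vbasis_def)
  also have "\<dots> = (\<Sum>f\<in>insert [] (supp x). x f * of_bool (tamari_le Leaf (phiF f)))"
    by (rule Phi_eq[OF fin]) auto
  also have "\<dots> = (\<Sum>f\<in>insert [] (supp x). (if f = [] then x f else 0))"
  proof (intro sum.cong refl)
    fix f
    have "tamari_le Leaf (phiF f) \<longleftrightarrow> f = []"
    proof
      assume "tamari_le Leaf (phiF f)"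
      then have "phiF f = Leaf" using le_size[of Leaf "phiF f"] by (cases "phiF f") auto
      then show "f = []" using phiF_inj[of f "[]"] by simp
    qed simp
    then show "x f * of_bool (tamari_le Leaf (phiF f)) = (if f = [] then x f else 0)" by simp
  qed
  also have "\<dots> = x []" using fin by (simp add: sum.delta)
  finally show ?thesis by (simp add: counitN_def)
qed

lemma Phi_graded:
  assumes "fsupp x" "\<forall>f. x f \<noteq> 0 \<longrightarrow> fdeg f = n" "Phi x t \<noteq> 0"
  shows "bsize t = n"
proof -
  have fin: "finite (supp x)" using assms unfolding fsupp_def by simp
  have "(\<Sum>f\<in>supp x. x f * of_bool (tamari_le t (phiF f))) \<noteq> 0"
    using assms(3) Phi_eq[OF fin, of x t] by simp
  then obtain f where f: "f \<in> supp x" "x f * of_bool (tamari_le t (phiF f)) \<noteq> 0"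
    by (rule sum.not_neutral_contains_not_neutral)
  then have "tamari_le t (phiF f)" by (cases "tamari_le t (phiF f)") auto
  then have "bsize t = bsize (phiF f)" by (rule le_size)
  then show ?thesis using assms(2) f fdeg_phi by simp
qed


lemma lin_sumvec:
  assumes "finite I"
  shows "lin g (\<lambda>p. \<Sum>i\<in>I. w i * vbasis (h i) p) b = (\<Sum>i\<in>I. w i * g (h i) b)"
  unfolding lin_def using sumvec[OF assms, where w=w and h=h and F="\<lambda>p. g p b"] by (simp add: mult.commute)

lemma multN_eq:
  assumes "fsupp x" "fsupp y"
  shows "multN x y = (\<lambda>c. \<Sum>i\<in>supp x \<times> supp y. (\<lambda>(a, b). x a * y b) i * vbasis ((\<lambda>(a, b). a @ b) i) c)"
  unfolding multN_def lin2_def by (intro ext) (simp add: sum.cartesian_product case_prod_beta')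

lemma multLR_eq: "multLR \<xi> \<eta> u = (\<Sum>i\<in>{0..bsize u}. \<xi> (fst (ysplit u i)) * \<eta> (snd (ysplit u i)))"
  unfolding multLR_def tpair_def DeltaY_basis_def
  using sumvec1[where I="{0..bsize u}" and h="ysplit u" and F="\<lambda>p. \<xi> (fst p) * \<eta> (snd p)"] by simp

lemma Phi_mult:
  assumes "fsupp x" "fsupp y"
  shows "Phi (multN x y) = multLR (Phi x) (Phi y)"
proof
  fix u
  have fx: "finite (supp x)" and fy: "finite (supp y)" using assms unfolding fsupp_def by auto
  have "Phi (multN x y) u = (\<Sum>i\<in>supp x \<times> supp y. (\<lambda>(a, b). x a * y b) i * Phi_basis ((\<lambda>(a, b). a @ b) i) u)"
    unfolding Phi_def multN_eq[OF assms] by (rule lin_sumvec) (use fx fy in simp)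
  also have "\<dots> = (\<Sum>(a, b)\<in>supp x \<times> supp y. x a * y b *
      (\<Sum>i\<in>{0..bsize u}. of_bool (tamari_le (fst (ysplit u i)) (phiF a)) * of_bool (tamari_le (snd (ysplit u i)) (phiF b))))"
  proof -
    have e: "Phi_basis (a @ b) u = (\<Sum>i\<in>{0..bsize u}. of_bool (tamari_le (fst (ysplit u i)) (phiF a)) * of_bool (tamari_le (snd (ysplit u i)) (phiF b)))" for a b
      by (simp only: Phi_basis_eq dind_of_bool phiF_append le_under_sum)
    show ?thesis by (intro sum.cong refl) (auto simp: e)
  qed
  also have "\<dots> = (\<Sum>i\<in>{0..bsize u}. \<Sum>(a, b)\<in>supp x \<times> supp y. (x a * of_bool (tamari_le (fst (ysplit u i)) (phiF a))) *
      (y b * of_bool (tamari_le (snd (ysplit u i)) (phiF b))))"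
    by (subst sum.swap) (auto simp: sum_distrib_left ac_simps case_prod_beta' intro!: sum.cong)
  also have "\<dots> = (\<Sum>i\<in>{0..bsize u}. Phi x (fst (ysplit u i)) * Phi y (snd (ysplit u i)))"
    by (intro sum.cong refl)
       (simp add: Phi_eq[OF fx] Phi_eq[OF fy] sum_product sum.cartesian_product case_prod_beta')
  also have "\<dots> = multLR (Phi x) (Phi y) u" by (simp add: multLR_eq)
  finally show "Phi (multN x y) u = multLR (Phi x) (Phi y) u" .
qed

lemma admissible_fadm: "admissible f R = fadm 0 f R"
  unfolding admissible_def fadm_def nodes_def by simp

lemma DeltaN_eq:
  assumes "fsupp x"
  shows "DeltaN x = (\<lambda>p. \<Sum>i\<in>Sigma (supp x) (\<lambda>f. {R. fadm 0 f R}).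
     (\<lambda>(f, R). x f) i * vbasis ((\<lambda>(f, R). (fcutpart R 0 f, fremain R 0 f)) i) p)"
proof
  fix p
  have fx: "finite (supp x)" using assms unfolding fsupp_def by auto
  have "DeltaN x p = (\<Sum>f\<in>supp x. x f * (\<Sum>R\<in>{R. fadm 0 f R}. vbasis (fcutpart R 0 f, fremain R 0 f) p))"
    unfolding DeltaN_def lin_def DeltaN_basis_def admissible_fadm by simp
  also have "\<dots> = (\<Sum>f\<in>supp x. \<Sum>R\<in>{R. fadm 0 f R}. x f * vbasis (fcutpart R 0 f, fremain R 0 f) p)"
    by (simp add: sum_distrib_left)
  also have "\<dots> = (\<Sum>i\<in>Sigma (supp x) (\<lambda>f. {R. fadm 0 f R}).
     (\<lambda>(f, R). x f) i * vbasis ((\<lambda>(f, R). (fcutpart R 0 f, fremain R 0 f)) i) p)"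
    using fx finite_fadm by (subst sum.Sigma) (auto simp: case_prod_beta')
  finally show "DeltaN x p = \<dots>" .
qed

lemma Delta_Phi:
  assumes "fsupp x"
  shows "tensor_map Phi_basis Phi_basis (DeltaN x) = DeltaLR (Phi x)"
proof
  fix p
  obtain s t :: btree where p: "p = (s, t)" by fastforce
  have fx: "finite (supp x)" using assms unfolding fsupp_def by auto
  have fS: "finite (Sigma (supp x) (\<lambda>f. {R. fadm 0 f R}))" using fx finite_fadm by auto
  have "tensor_map Phi_basis Phi_basis (DeltaN x) (s, t) =
     (\<Sum>i\<in>Sigma (supp x) (\<lambda>f. {R. fadm 0 f R}). (\<lambda>(f, R). x f) i *
        (\<lambda>(a, b) (c, d). Phi_basis a c * Phi_basis b d) ((\<lambda>(f, R). (fcutpart R 0 f, fremain R 0 f)) i) (s, t))"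
    unfolding tensor_map_def DeltaN_eq[OF assms] by (rule lin_sumvec[OF fS])
  also have "\<dots> = (\<Sum>f\<in>supp x. \<Sum>R\<in>{R. fadm 0 f R}. x f *
      (of_bool (tamari_le s (phiF (fcutpart R 0 f))) * of_bool (tamari_le t (phiF (fremain R 0 f)))))"
    using fx finite_fadm by (subst sum.Sigma) (auto simp: case_prod_beta' Phi_basis_eq dind_of_bool)
  also have "\<dots> = (\<Sum>f\<in>supp x. x f * of_nat (RcF 0 f s t))"
    unfolding RcF_def by (simp add: sum_distrib_left)
  also have "\<dots> = (\<Sum>f\<in>supp x. x f * of_nat (Lc (phiF f) s t))"
    by (simp add: main_count)
  also have "\<dots> = (\<Sum>f\<in>supp x. \<Sum>is\<in>Ms (bsize s) (bsize t). x f * of_bool (tamari_le (ww s t is) (phiF f)))"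
    unfolding Lc_def by (simp add: sum_distrib_left)
  also have "\<dots> = (\<Sum>is\<in>Ms (bsize s) (bsize t). Phi x (ww s t is))"
    by (subst sum.swap) (simp add: Phi_eq[OF fx])
  also have "\<dots> = DeltaLR (Phi x) (s, t)"
    unfolding DeltaLR_def dpair_def multY_basis_def
    using sumvec1[where I="Ms (bsize s) (bsize t)" and h="ww s t" and F="Phi x"] finite_Ms
    by (simp add: Ms_def ww_def)
  finally show "tensor_map Phi_basis Phi_basis (DeltaN x) p = DeltaLR (Phi x) p" using p by simp
qed


lemma fsupp_Phi:
  assumes "fsupp x" shows "fsupp (Phi x)"
proof -
  have fx: "finite (supp x)" using assms unfolding fsupp_def by auto
  have "supp (Phi x) \<subseteq> (\<Union>f\<in>supp x. {u. tamari_le u (phiF f)})"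
  proof
    fix u assume "u \<in> supp (Phi x)"
    then have "(\<Sum>f\<in>supp x. x f * of_bool (tamari_le u (phiF f))) \<noteq> 0" using Phi_eq[OF fx, of x u] by simp
    then obtain f where f: "f \<in> supp x" "x f * of_bool (tamari_le u (phiF f)) \<noteq> 0"
      by (rule sum.not_neutral_contains_not_neutral)
    then have "tamari_le u (phiF f)" by (cases "tamari_le u (phiF f)") auto
    then show "u \<in> (\<Union>f\<in>supp x. {u. tamari_le u (phiF f)})" using f by auto
  qed
  moreover have "finite (\<Union>f\<in>supp x. {u. tamari_le u (phiF f)})" using fx finite_down by auto
  ultimately show ?thesis unfolding fsupp_def by (rule finite_subset)
qed

lemma Phi_diff:
  assumes "fsupp x" "fsupp y"
  shows "Phi (\<lambda>f. x f - y f) u = Phi x u - Phi y u"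
proof -
  have fin: "finite (supp x \<union> supp y)" using assms unfolding fsupp_def by auto
  have "Phi (\<lambda>f. x f - y f) u = (\<Sum>f\<in>supp x \<union> supp y. (x f - y f) * of_bool (tamari_le u (phiF f)))"
    by (rule Phi_eq[OF fin]) auto
  also have "\<dots> = Phi x u - Phi y u"
    using Phi_eq[OF fin, of x u] Phi_eq[OF fin, of y u] by (simp add: sum_subtractf left_diff_distrib)
  finally show ?thesis .
qed

lemma Phi_lincomb:
  assumes "finite A" "\<forall>a\<in>A. fsupp (X a)"
  shows "fsupp (\<lambda>f. \<Sum>a\<in>A. c a * X a f) \<and> Phi (\<lambda>f. \<Sum>a\<in>A. c a * X a f) = (\<lambda>u. \<Sum>a\<in>A. c a * Phi (X a) u)"
proof -
  define S where "S = (\<Union>a\<in>A. supp (X a))"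
  have fS: "finite S" unfolding S_def using assms unfolding fsupp_def by auto
  have sub: "supp (\<lambda>f. \<Sum>a\<in>A. c a * X a f) \<subseteq> S"
  proof
    fix f assume "f \<in> supp (\<lambda>f. \<Sum>a\<in>A. c a * X a f)"
    then have "(\<Sum>a\<in>A. c a * X a f) \<noteq> 0" by simp
    then obtain a where "a \<in> A" "c a * X a f \<noteq> 0" by (rule sum.not_neutral_contains_not_neutral)
    then show "f \<in> S" unfolding S_def by auto
  qed
  have "fsupp (\<lambda>f. \<Sum>a\<in>A. c a * X a f)" unfolding fsupp_def using finite_subset[OF sub fS] .
  moreover have "Phi (\<lambda>f. \<Sum>a\<in>A. c a * X a f) u = (\<Sum>a\<in>A. c a * Phi (X a) u)" for u
  proof -
    have "Phi (\<lambda>f. \<Sum>a\<in>A. c a * X a f) u = (\<Sum>f\<in>S. (\<Sum>a\<in>A. c a * X a f) * of_bool (tamari_le u (phiF f)))"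
      by (rule Phi_eq[OF fS sub])
    also have "\<dots> = (\<Sum>a\<in>A. c a * (\<Sum>f\<in>S. X a f * of_bool (tamari_le u (phiF f))))"
    proof -
      have "(\<Sum>f\<in>S. (\<Sum>a\<in>A. c a * X a f) * of_bool (tamari_le u (phiF f))) =
            (\<Sum>f\<in>S. \<Sum>a\<in>A. c a * X a f * of_bool (tamari_le u (phiF f)))"
        by (simp add: sum_distrib_right)
      also have "\<dots> = (\<Sum>a\<in>A. \<Sum>f\<in>S. c a * X a f * of_bool (tamari_le u (phiF f)))"
        by (rule sum.swap)
      also have "\<dots> = (\<Sum>a\<in>A. c a * (\<Sum>f\<in>S. X a f * of_bool (tamari_le u (phiF f))))"
        by (simp add: sum_distrib_left ac_simps)
      finally show ?thesis .
    qed
    also have "\<dots> = (\<Sum>a\<in>A. c a * Phi (X a) u)"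
    proof (intro sum.cong refl)
      fix a assume "a \<in> A"
      then have "supp (X a) \<subseteq> S" unfolding S_def by auto
      then show "c a * (\<Sum>f\<in>S. X a f * of_bool (tamari_le u (phiF f))) = c a * Phi (X a) u"
        using Phi_eq[OF fS] by simp
    qed
    finally show ?thesis .
  qed
  ultimately show ?thesis by auto
qed

lemma Phi_vbasis: "Phi (vbasis f) = dind (phiF f)"
proof
  fix u
  have "Phi (vbasis f) u = (\<Sum>g\<in>{f}. vbasis f g * of_bool (tamari_le u (phiF g)))"
    by (rule Phi_eq) (auto simp: vbasis_def)
  then show "Phi (vbasis f) u = dind (phiF f) u" by (simp add: vbasis_def dind_of_bool)
qed

lemma fsupp_vbasis: "fsupp (vbasis a)"
  unfolding fsupp_def vbasis_def by simp

lemma V_vbasis: "\<exists>x. fsupp x \<and> Phi x = vbasis t"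
proof (induction t rule: measure_induct_rule[of pot])
  case (less t)
  define D where "D = {a. tamari_le a t \<and> a \<noteq> t}"
  have fD: "finite D" unfolding D_def by (rule finite_subset[OF _ finite_down[of t]]) auto
  have "\<forall>a\<in>D. \<exists>x. fsupp x \<and> Phi x = vbasis a"
    using less unfolding D_def by (auto intro: le_pot_strict)
  then obtain X where X: "\<forall>a\<in>D. fsupp (X a) \<and> Phi (X a) = vbasis a" by (rule bchoice[THEN exE]) blast
  define y where "y = (\<lambda>f. \<Sum>a\<in>D. 1 * X a f)"
  have Y: "fsupp y" "Phi y = (\<lambda>u. \<Sum>a\<in>D. 1 * Phi (X a) u)"
    using Phi_lincomb[OF fD, of X "\<lambda>a. 1"] X unfolding y_def by auto
  define x where "x = (\<lambda>f. vbasis (psiB t) f - y f)"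
  have "fsupp x" unfolding x_def fsupp_def using Y(1) fsupp_vbasis[of "psiB t"] unfolding fsupp_def
    by (rule_tac finite_subset[of _ "supp (vbasis (psiB t)) \<union> supp y"]) auto
  moreover have "Phi x = vbasis t"
  proof
    fix u
    have "Phi x u = dind t u - (\<Sum>a\<in>D. vbasis a u)"
      unfolding x_def Phi_diff[OF fsupp_vbasis Y(1)] Phi_vbasis phiF_psiB Y(2) using X by simp
    also have "(\<Sum>a\<in>D. vbasis a u) = (if u \<in> D then 1 else 0)"
      unfolding vbasis_def using fD by (simp add: sum.delta eq_commute)
    finally show "Phi x u = vbasis t u"
      unfolding dind_def vbasis_def D_def by auto
  qed
  ultimately show ?case by blast
qed

lemma Phi_surj:
  assumes "fsupp \<xi>" shows "\<exists>x. fsupp x \<and> Phi x = \<xi>"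
proof -
  have fin: "finite (supp \<xi>)" using assms unfolding fsupp_def by auto
  have "\<forall>a. \<exists>x. fsupp x \<and> Phi x = vbasis a" using V_vbasis by blast
  then obtain X where X: "\<forall>a. fsupp (X a) \<and> Phi (X a) = vbasis a" by (rule choice[THEN exE]) blast
  have L: "fsupp (\<lambda>f. \<Sum>a\<in>supp \<xi>. \<xi> a * X a f) \<and> Phi (\<lambda>f. \<Sum>a\<in>supp \<xi>. \<xi> a * X a f) = (\<lambda>u. \<Sum>a\<in>supp \<xi>. \<xi> a * Phi (X a) u)"
    using Phi_lincomb[OF fin, of X \<xi>] X by auto
  have "(\<lambda>u. \<Sum>a\<in>supp \<xi>. \<xi> a * Phi (X a) u) = \<xi>"
  proof
    fix u
    have "(\<Sum>a\<in>supp \<xi>. \<xi> a * Phi (X a) u) = (\<Sum>a\<in>supp \<xi>. if a = u then \<xi> a else 0)"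
      using X by (intro sum.cong refl) (auto simp: vbasis_def)
    also have "\<dots> = \<xi> u" using fin by (simp add: sum.delta)
    finally show "(\<Sum>a\<in>supp \<xi>. \<xi> a * Phi (X a) u) = \<xi> u" .
  qed
  then show ?thesis using L by auto
qed

lemma Phi_inj: "inj_on Phi {x. fsupp x}"
proof (rule inj_onI)
  fix x y assume x: "x \<in> {x. fsupp x}" and y: "y \<in> {x. fsupp x}" and e: "Phi x = Phi y"
  define S where "S = supp x \<union> supp y"
  have fS: "finite S" using x y unfolding S_def fsupp_def by auto
  define z where "z = (\<lambda>f. x f - y f)"
  have zS: "\<forall>f. f \<notin> S \<longrightarrow> z f = 0" unfolding z_def S_def by auto
  have Z0: "(\<Sum>f\<in>S. z f * of_bool (tamari_le u (phiF f))) = 0" for u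
  proof -
    have "(\<Sum>f\<in>S. z f * of_bool (tamari_le u (phiF f))) = Phi z u"
      by (rule Phi_eq[OF fS, symmetric]) (use zS in auto)
    also have "\<dots> = 0" unfolding z_def using Phi_diff[of x y u] x y e by simp
    finally show ?thesis .
  qed
  have "\<forall>f. z f = 0"
  proof (rule ccontr)
    assume "\<not> (\<forall>f. z f = 0)"
    define Z where "Z = {f\<in>S. z f \<noteq> 0}"
    have fZ: "finite Z" "Z \<noteq> {}" unfolding Z_def using fS zS \<open>\<not> (\<forall>f. z f = 0)\<close> by auto
    have "Max ((\<lambda>f. pot (phiF f)) ` Z) \<in> (\<lambda>f. pot (phiF f)) ` Z" using fZ by (intro Max_in) auto
    then obtain f0 where f0: "f0 \<in> Z" "pot (phiF f0) = Max ((\<lambda>f. pot (phiF f)) ` Z)" by auto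
    have mx: "pot (phiF f) \<le> pot (phiF f0)" if "f \<in> Z" for f using f0 fZ that by simp
    have "(\<Sum>f\<in>S. z f * of_bool (tamari_le (phiF f0) (phiF f))) = (\<Sum>f\<in>S. if f = f0 then z f0 else 0)"
    proof (intro sum.cong refl)
      fix f assume fS': "f \<in> S"
      show "z f * of_bool (tamari_le (phiF f0) (phiF f)) = (if f = f0 then z f0 else 0)"
      proof (cases "f = f0")
        case False
        show ?thesis
        proof (cases "z f = 0")
          case False': False
          then have "f \<in> Z" using fS' unfolding Z_def by simp
          moreover have "phiF f0 \<noteq> phiF f" using \<open>f \<noteq> f0\<close> phiF_inj by metis
          ultimately have "\<not> tamari_le (phiF f0) (phiF f)" using mx le_pot_strict by fastforce
          then show ?thesis using \<open>f \<noteq> f0\<close> by simp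
        qed (use False in simp)
      qed simp
    qed
    also have "\<dots> = z f0" using fS f0 unfolding Z_def by (simp add: sum.delta')
    finally have "z f0 = 0" using Z0[of "phiF f0"] by simp
    then show False using f0 unfolding Z_def by simp
  qed
  then show "x = y" unfolding z_def by (intro ext) (simp add: right_minus_eq)
qed

theorem theorem8p10:
  shows "bij_betw Phi {x. fsupp x} {\<xi>. fsupp \<xi>}
    \<and> (\<forall>x n. fsupp x \<longrightarrow> (\<forall>f. x f \<noteq> 0 \<longrightarrow> fdeg f = n) \<longrightarrow>
              (\<forall>t. Phi x t \<noteq> 0 \<longrightarrow> bsize t = n))
    \<and> (\<forall>x y. fsupp x \<longrightarrow> fsupp y \<longrightarrow> Phi (multN x y) = multLR (Phi x) (Phi y))
    \<and> Phi unitN = unitLR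
    \<and> (\<forall>x. fsupp x \<longrightarrow> tensor_map Phi_basis Phi_basis (DeltaN x) = DeltaLR (Phi x))
    \<and> (\<forall>x. fsupp x \<longrightarrow> counitLR (Phi x) = counitN x)"
proof (intro conjI allI impI)
  show "bij_betw Phi {x. fsupp x} {\<xi>. fsupp \<xi>}"
  proof (rule bij_betw_imageI[OF Phi_inj])
    show "Phi ` {x. fsupp x} = {\<xi>. fsupp \<xi>}"
      using fsupp_Phi Phi_surj by blast
  qed
qed (auto intro: Phi_graded Phi_mult Phi_unit Delta_Phi Phi_counit)


end
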